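(* For $n\ge1$, let $\bm v$ and $\bm v^{(n)}$ be Markov chains of length variables with initial distributions $\pi$ and $\pi^{(n)}$ and transition kernels $\bm\psi=(\psi_j)_{j\ge1}$ and $\bm\psi^{(n)}=(\psi^{(n)}_j)_{j\ge1}$, respectively. Let $\bm w,\bm w^{(n)}$ be the corresponding Markov stick-breaking weights sequences, and let $\bm P,\bm P^{(n)}$ be proper Markov stick-breaking processes on $\mathbb X$ with parameters $(\pi,\bm\psi,P_0)$ and $(\pi^{(n)},\bm\psi^{(n)},P_0^{(n)})$. Suppose that, as $n\to\infty$: $\pi^{(n)}\to\pi$ weakly; $P_0^{(n)}\to P_0$ weakly; and for each $j\ge1$ and each sequence $u_n\to u$ in $[0,1]$, $\psi^{(n)}_j(u_n,\cdot)\to\psi_j(u,\cdot)$ weakly. Then $\bm v^{(n)}\to\bm v$ in distribution, $\bm w^{(n)}\to\bm w$ in distribution (in $[0,1]^\infty$ with the product topology), and $\bm P^{(n)}\to\bm P$ weakly in distribution.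
   Context: Let $\mathbb X$ be a complete separable metric space with Borel $\sigma$-field. Length variables $\bm v=(v_j)_{j\ge1}$ are $[0,1]$-valued random variables defining stick-breaking weights $w_1=v_1$, $w_j=v_j\prod_{i<j}(1-v_i)$. If $\bm v$ is a Markov chain with initial distribution $\pi$ and transition kernels $\psi_j(v,B)=\mathbb P[v_{j+1}\in B\mid v_j=v]$, $\bm w$ is the Markov stick-breaking weights sequence with parameters $(\pi,\bm\psi)$; given a diffuse probability measure $P_0$ on $\mathbb X$ and $(\theta_j)$ iid from $P_0$ independent of $\bm w$, $\bm P=\sum_j w_j\delta_{\theta_j}+(1-\sum_jw_j)P_0$ is the Markov stick-breaking process with parameters $(\pi,\bm\psi,P_0)$; it is proper if $\sum_j w_j=1$ a.s. Random probability measures $\bm P^{(n)}$ converge weakly in distribution to $\bm P$ if $\int f\,d\bm P^{(n)}\to\int f\,d\bm P$ in distribution for every bounded continuous $f:\mathbb X\to\mathbb R$. *)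

theory Defs
  imports "HOL-Probability.Probability"
begin

definition weak_conv_seq :: "(nat \<Rightarrow> 'b::topological_space measure) \<Rightarrow> 'b measure \<Rightarrow> bool" where
  "weak_conv_seq \<mu>s \<mu> \<longleftrightarrow>
     (\<forall>f :: 'b \<Rightarrow> real. continuous_on UNIV f \<and> bounded (range f) \<longrightarrow>
        (\<lambda>n. \<integral>x. f x \<partial>\<mu>s n) \<longlonglongrightarrow> (\<integral>x. f x \<partial>\<mu>))"

text \<open>Coordinates are 0-based: coordinate i is the paper's v_(i+1); the transition from
  coordinate i to coordinate i+1 uses the paper's kernel psi_(i+1), i.e. psi (Suc i).\<close>
fun mc_cyl :: "(nat \<Rightarrow> real \<Rightarrow> real measure) \<Rightarrow> (nat \<Rightarrow> real set) \<Rightarrow> nat \<Rightarrow> nat \<Rightarrow> real \<Rightarrow> ennreal" where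
  "mc_cyl \<psi> B i 0 u = indicator (B i) u"
| "mc_cyl \<psi> B i (Suc m) u = indicator (B i) u * (\<integral>\<^sup>+ y. mc_cyl \<psi> B (Suc i) m y \<partial>(\<psi> (Suc i) u))"

definition markov_chain_law :: "real measure \<Rightarrow> (nat \<Rightarrow> real \<Rightarrow> real measure) \<Rightarrow> (nat \<Rightarrow> real) measure \<Rightarrow> bool" where
  "markov_chain_law \<pi> \<psi> \<mu> \<longleftrightarrow>
     prob_space \<mu> \<and> sets \<mu> = sets (PiM UNIV (\<lambda>_::nat. borel :: real measure)) \<and>
     (\<forall>k B. (\<forall>i. B i \<in> sets borel) \<longrightarrow>
        emeasure \<mu> {x \<in> space \<mu>. \<forall>i\<le>k. x i \<in> B i} = (\<integral>\<^sup>+ u. mc_cyl \<psi> B 0 k u \<partial>\<pi>))"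

definition length_params :: "real measure \<Rightarrow> (nat \<Rightarrow> real \<Rightarrow> real measure) \<Rightarrow> bool" where
  "length_params \<pi> \<psi> \<longleftrightarrow>
     prob_space \<pi> \<and> sets \<pi> = sets borel \<and> emeasure \<pi> {0..1} = 1 \<and>
     (\<forall>j\<ge>1. \<psi> j \<in> restrict_space borel {0..1} \<rightarrow>\<^sub>M prob_algebra borel \<and>
        (\<forall>u\<in>{0..1}. emeasure (\<psi> j u) {0..1} = 1))"

definition sb_weights :: "(nat \<Rightarrow> real) \<Rightarrow> nat \<Rightarrow> real" where
  "sb_weights v j = v j * (\<Prod>i<j. 1 - v i)"

definition sb_measure :: "(nat \<Rightarrow> real) \<Rightarrow> (nat \<Rightarrow> 'a::topological_space) \<Rightarrow> 'a measure \<Rightarrow> 'a measure" where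
  "sb_measure w \<theta> P0 = measure_of UNIV (sets borel)
     (\<lambda>A. (\<Sum>j. ennreal (w j) * indicator A (\<theta> j)) + ennreal (1 - (\<Sum>j. w j)) * emeasure P0 A)"

definition diffuse_prob :: "'a::topological_space measure \<Rightarrow> bool" where
  "diffuse_prob P \<longleftrightarrow> prob_space P \<and> sets P = sets borel \<and> (\<forall>x. emeasure P {x} = 0)"

text \<open>The joint law of (V, Theta) is the product of the Markov chain law of V and the
  iid P0 law of Theta (so Theta is iid P0 and independent of V).\<close>
definition proper_msbp ::
  "'w measure \<Rightarrow> ('w \<Rightarrow> nat \<Rightarrow> real) \<Rightarrow> ('w \<Rightarrow> nat \<Rightarrow> 'a::topological_space) \<Rightarrow>
   real measure \<Rightarrow> (nat \<Rightarrow> real \<Rightarrow> real measure) \<Rightarrow> 'a measure \<Rightarrow> bool" where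
  "proper_msbp M V \<Theta> \<pi> \<psi> P0 \<longleftrightarrow>
     prob_space M \<and> length_params \<pi> \<psi> \<and> diffuse_prob P0 \<and>
     (\<forall>\<omega>\<in>space M. \<forall>j. V \<omega> j \<in> {0..1}) \<and>
     markov_chain_law \<pi> \<psi> (distr M (PiM UNIV (\<lambda>_. borel)) V) \<and>
     (\<lambda>\<omega>. (V \<omega>, \<Theta> \<omega>)) \<in> M \<rightarrow>\<^sub>M (PiM UNIV (\<lambda>_. borel) \<Otimes>\<^sub>M PiM UNIV (\<lambda>_. borel)) \<and>
     distr M (PiM UNIV (\<lambda>_. borel) \<Otimes>\<^sub>M PiM UNIV (\<lambda>_. borel)) (\<lambda>\<omega>. (V \<omega>, \<Theta> \<omega>))
       = distr M (PiM UNIV (\<lambda>_. borel)) V \<Otimes>\<^sub>M PiM UNIV (\<lambda>_. P0) \<and>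
     (AE \<omega> in M. sb_weights (V \<omega>) sums 1)"

end

theory Submission
  imports Defs
begin


definition cconv :: "'b::metric_space set \<Rightarrow> (nat \<Rightarrow> 'b \<Rightarrow> real) \<Rightarrow> ('b \<Rightarrow> real) \<Rightarrow> bool" where
  "cconv K h h0 \<longleftrightarrow> (\<forall>xs x. (\<forall>n. xs n \<in> K) \<longrightarrow> x \<in> K \<longrightarrow> xs \<longlonglongrightarrow> x \<longrightarrow> (\<lambda>n. h n (xs n)) \<longlonglongrightarrow> h0 x)"

lemma cconvD: "cconv K h h0 \<Longrightarrow> (\<And>n. xs n \<in> K) \<Longrightarrow> x \<in> K \<Longrightarrow> xs \<longlonglongrightarrow> x \<Longrightarrow> (\<lambda>n. h n (xs n)) \<longlonglongrightarrow> h0 x"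
  unfolding cconv_def by blast

lemma cconv_subseq:
  fixes h :: "nat \<Rightarrow> 'b::metric_space \<Rightarrow> real"
  assumes cc: "cconv K h h0" and r: "strict_mono r" and xs: "\<And>k. xs k \<in> K" "x \<in> K" "xs \<longlonglongrightarrow> x"
  shows "(\<lambda>k. h (r k) (xs k)) \<longlonglongrightarrow> h0 x"
proof -
  define ys where "ys n = (if n \<in> range r then xs (inv r n) else x)" for n
  have inj: "inj r" using r by (rule strict_mono_imp_inj_on)
  have ysr: "ys (r k) = xs k" for k using inj by (simp add: ys_def)
  have ysK: "ys n \<in> K" for n using xs by (simp add: ys_def)
  have "ys \<longlonglongrightarrow> x"
    unfolding lim_sequentially
  proof (intro allI impI)
    fix e :: real assume "e > 0"
    then obtain no where no: "\<And>n. n \<ge> no \<Longrightarrow> dist (xs n) x < e"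
      using xs(3) unfolding lim_sequentially by blast
    have "dist (ys n) x < e" if "n \<ge> r no" for n
    proof (cases "n \<in> range r")
      case True
      then obtain k where k: "n = r k" by auto
      with that have "k \<ge> no" using r by (simp add: strict_mono_less_eq)
      then show ?thesis using no k ysr by simp
    next
      case False then show ?thesis using \<open>e>0\<close> by (simp add: ys_def)
    qed
    then show "\<exists>no. \<forall>n\<ge>no. dist (ys n) x < e" by blast
  qed
  then have "(\<lambda>n. h n (ys n)) \<longlonglongrightarrow> h0 x" by (rule cconvD[OF cc ysK xs(2)])
  from LIMSEQ_subseq_LIMSEQ[OF this r] show ?thesis by (simp add: o_def ysr)
qed

lemma cconv_cont:
  fixes h :: "nat \<Rightarrow> 'b::metric_space \<Rightarrow> real"
  assumes cc: "cconv K h h0"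
  shows "continuous_on K h0"
proof (rule continuous_on_sequentiallyI)
  fix xs x assume xs: "\<forall>n. xs n \<in> K" "x \<in> K" "xs \<longlonglongrightarrow> x"
  have "\<exists>N. \<forall>n\<ge>N. \<bar>h n (xs k) - h0 (xs k)\<bar> < inverse (real (Suc k))" for k
  proof -
    have "(\<lambda>n. h n (xs k)) \<longlonglongrightarrow> h0 (xs k)"
      using cc xs by (intro cconvD[OF cc]) auto
    then show ?thesis unfolding LIMSEQ_iff by (simp add: real_norm_def)
  qed
  then obtain N where N: "\<And>k n. n \<ge> N k \<Longrightarrow> \<bar>h n (xs k) - h0 (xs k)\<bar> < inverse (real (Suc k))"
    by metis
  define r where "r k = k + (\<Sum>i\<le>k. N i)" for k
  have r: "strict_mono r" unfolding strict_mono_Suc_iff r_def by simp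
  have rN: "r k \<ge> N k" for k unfolding r_def
    using member_le_sum[of k "{..k}" N] by simp
  have 1: "(\<lambda>k. h (r k) (xs k)) \<longlonglongrightarrow> h0 x" using cconv_subseq[OF cc r] xs by auto
  have 2: "(\<lambda>k. h (r k) (xs k) - h0 (xs k)) \<longlonglongrightarrow> 0"
  proof (rule Lim_null_comparison)
    show "\<forall>\<^sub>F k in sequentially. norm (h (r k) (xs k) - h0 (xs k)) \<le> inverse (real (Suc k))"
      using N[OF rN] by (auto intro!: always_eventually less_imp_le)
    show "(\<lambda>k. inverse (real (Suc k))) \<longlonglongrightarrow> 0" by (rule LIMSEQ_inverse_real_of_nat)
  qed
  have "(\<lambda>k. h (r k) (xs k) - (h (r k) (xs k) - h0 (xs k))) \<longlonglongrightarrow> h0 x - 0"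
    by (intro tendsto_diff 1 2)
  then show "(\<lambda>n. h0 (xs n)) \<longlonglongrightarrow> h0 x" by simp
qed

lemma cconv_unif:
  fixes h :: "nat \<Rightarrow> 'b::metric_space \<Rightarrow> real"
  assumes cc: "cconv K h h0" and K: "compact K" and e: "e > 0"
  shows "eventually (\<lambda>n. \<forall>x\<in>K. \<bar>h n x - h0 x\<bar> < e) sequentially"
proof (rule ccontr)
  assume "\<not> ?thesis"
  from not_eventually_sequentiallyD[OF this] obtain r :: "nat \<Rightarrow> nat" where r: "strict_mono r"
    and rP': "\<forall>n. \<not> (\<forall>x\<in>K. \<bar>h (r n) x - h0 x\<bar> < e)" by auto
  have rP: "\<And>n. \<exists>x\<in>K. \<bar>h (r n) x - h0 x\<bar> \<ge> e" using rP' by (auto simp: not_less)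
  then have "\<forall>n. \<exists>x. x \<in> K \<and> \<bar>h (r n) x - h0 x\<bar> \<ge> e" by blast
  from choice[OF this] obtain xs where xs': "\<forall>n. xs n \<in> K \<and> \<bar>h (r n) (xs n) - h0 (xs n)\<bar> \<ge> e" by blast
  then have xs: "\<And>n. xs n \<in> K" "\<And>n. \<bar>h (r n) (xs n) - h0 (xs n)\<bar> \<ge> e" by auto
  from K have "seq_compact K" by (rule compact_imp_seq_compact)
  then obtain l s where l: "l \<in> K" "strict_mono s" "(xs \<circ> s) \<longlonglongrightarrow> l"
    using seq_compactE[of K xs] xs(1) by blast
  have rs: "strict_mono (r \<circ> s)" using r l(2) by (rule strict_mono_o)
  have 1: "(\<lambda>k. h ((r \<circ> s) k) ((xs \<circ> s) k)) \<longlonglongrightarrow> h0 l"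
    using cconv_subseq[OF cc rs, of "xs \<circ> s" l] xs l by auto
  have 2: "(\<lambda>k. h0 ((xs \<circ> s) k)) \<longlonglongrightarrow> h0 l"
    using cconv_cont[OF cc] l xs(1) unfolding continuous_on_sequentially by (auto simp: o_def)
  have "(\<lambda>k. h ((r \<circ> s) k) ((xs \<circ> s) k) - h0 ((xs \<circ> s) k)) \<longlonglongrightarrow> h0 l - h0 l"
    by (intro tendsto_diff 1 2)
  then have "eventually (\<lambda>k. \<bar>h ((r \<circ> s) k) ((xs \<circ> s) k) - h0 ((xs \<circ> s) k)\<bar> < e) sequentially"
    using e unfolding LIMSEQ_iff by (auto simp: real_norm_def eventually_sequentially)
  then obtain k where "\<bar>h ((r \<circ> s) k) ((xs \<circ> s) k) - h0 ((xs \<circ> s) k)\<bar> < e"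
    by (auto simp: eventually_sequentially)
  with xs(2)[of "s k"] show False by simp
qed

lemma integral_diff_small:
  fixes f g :: "'b \<Rightarrow> real"
  assumes M: "prob_space M" and fm: "f \<in> borel_measurable M" "g \<in> borel_measurable M"
    and fb: "\<And>x. \<bar>f x\<bar> \<le> B" "\<And>x. \<bar>g x\<bar> \<le> B"
    and ae: "AE x in M. \<bar>f x - g x\<bar> \<le> e"
  shows "\<bar>(\<integral>x. f x \<partial>M) - (\<integral>x. g x \<partial>M)\<bar> \<le> e"
proof -
  interpret prob_space M by fact
  have i: "integrable M f" "integrable M g"
    using fm fb by (auto intro!: integrable_const_bound[where B=B])
  have "\<bar>(\<integral>x. f x \<partial>M) - (\<integral>x. g x \<partial>M)\<bar> = \<bar>\<integral>x. f x - g x \<partial>M\<bar>"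
    using i by simp
  also have "\<dots> \<le> (\<integral>x. \<bar>f x - g x\<bar> \<partial>M)" by (rule integral_abs_bound)
  also have "\<dots> \<le> (\<integral>x. e \<partial>M)"
    using i ae by (intro integral_mono_AE) auto
  also have "\<dots> = e" by (simp add: prob_space)
  finally show ?thesis .
qed

lemma weak_conv_cconv:
  fixes \<nu> :: "nat \<Rightarrow> 'b::metric_space measure" and h :: "nat \<Rightarrow> 'b \<Rightarrow> real"
  assumes K: "compact K" and r: "continuous_on UNIV r" "\<And>x. r x \<in> K" "\<And>x. x \<in> K \<Longrightarrow> r x = x"
    and P: "\<And>n. prob_space (\<nu> n)" "\<And>n. sets (\<nu> n) = sets borel" "\<And>n. AE x in \<nu> n. x \<in> K"
    and P0: "prob_space \<nu>0" "sets \<nu>0 = sets borel" "AE x in \<nu>0. x \<in> K"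
    and wc: "weak_conv_seq \<nu> \<nu>0"
    and hm: "\<And>n. h n \<in> borel_measurable borel" "h0 \<in> borel_measurable borel"
    and hb: "\<And>n x. \<bar>h n x\<bar> \<le> B" "\<And>x. \<bar>h0 x\<bar> \<le> B"
    and cc: "cconv K h h0"
  shows "(\<lambda>n. \<integral>x. h n x \<partial>\<nu> n) \<longlonglongrightarrow> (\<integral>x. h0 x \<partial>\<nu>0)"
proof -
  define g where "g = h0 \<circ> r"
  have gc: "continuous_on UNIV g" unfolding g_def
    using r(2) continuous_on_compose2[OF cconv_cont[OF cc] r(1)] by (auto simp: o_def)
  have gb: "\<bar>g x\<bar> \<le> B" for x unfolding g_def using hb by simp
  have gbd: "bounded (range g)" using gb unfolding bounded_real by blast
  have gm: "g \<in> borel_measurable borel" using gc by (rule borel_measurable_continuous_onI)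
  have A: "(\<lambda>n. \<integral>x. g x \<partial>\<nu> n) \<longlonglongrightarrow> (\<integral>x. g x \<partial>\<nu>0)"
    using wc gc gbd unfolding weak_conv_seq_def by blast
  have e1: "(\<integral>x. g x \<partial>\<nu> n) = (\<integral>x. h0 x \<partial>\<nu> n)" for n
  proof (rule integral_cong_AE)
    show "g \<in> borel_measurable (\<nu> n)" "h0 \<in> borel_measurable (\<nu> n)"
      using gm hm by (simp_all add: measurable_cong_sets[OF P(2) refl])
    show "AE x in \<nu> n. g x = h0 x" using P(3)[of n] by eventually_elim (simp add: g_def r(3))
  qed
  have e0: "(\<integral>x. g x \<partial>\<nu>0) = (\<integral>x. h0 x \<partial>\<nu>0)"
  proof (rule integral_cong_AE)
    show "g \<in> borel_measurable \<nu>0" "h0 \<in> borel_measurable \<nu>0"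
      using gm hm by (simp_all add: measurable_cong_sets[OF P0(2) refl])
    show "AE x in \<nu>0. g x = h0 x" using P0(3) by eventually_elim (simp add: g_def r(3))
  qed
  have D: "(\<lambda>n. (\<integral>x. h n x \<partial>\<nu> n) - (\<integral>x. h0 x \<partial>\<nu> n)) \<longlonglongrightarrow> 0"
    unfolding lim_sequentially
  proof (intro allI impI)
    fix e :: real assume "e > 0"
    then have "e/2 > 0" by simp
    from cconv_unif[OF cc K this] obtain N where N: "\<And>n x. n \<ge> N \<Longrightarrow> x \<in> K \<Longrightarrow> \<bar>h n x - h0 x\<bar> < e/2"
      unfolding eventually_sequentially by blast
    have "\<bar>(\<integral>x. h n x \<partial>\<nu> n) - (\<integral>x. h0 x \<partial>\<nu> n)\<bar> \<le> e/2" if "n \<ge> N" for n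
    proof (rule integral_diff_small[OF P(1)])
      show "h n \<in> borel_measurable (\<nu> n)" "h0 \<in> borel_measurable (\<nu> n)"
        using hm by (simp_all add: measurable_cong_sets[OF P(2) refl])
      show "AE x in \<nu> n. \<bar>h n x - h0 x\<bar> \<le> e/2"
        using P(3)[of n] by eventually_elim (use N[OF that] in \<open>auto intro: less_imp_le\<close>)
    qed (use hb in auto)
    then show "\<exists>no. \<forall>n\<ge>no. dist ((\<integral>x. h n x \<partial>\<nu> n) - (\<integral>x. h0 x \<partial>\<nu> n)) 0 < e"
      using \<open>e > 0\<close> by (intro exI[of _ N]) (force simp: dist_real_def)
  qed
  have "(\<lambda>n. ((\<integral>x. h n x \<partial>\<nu> n) - (\<integral>x. h0 x \<partial>\<nu> n)) + (\<integral>x. g x \<partial>\<nu> n)) \<longlonglongrightarrow> 0 + (\<integral>x. g x \<partial>\<nu>0)"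
    by (intro tendsto_add D A)
  then show ?thesis by (simp add: e1 e0)
qed



abbreviation PS :: "(nat \<Rightarrow> real) measure" where "PS \<equiv> PiM UNIV (\<lambda>_. borel)"

definition clamp01 :: "real \<Rightarrow> real" where "clamp01 u = max 0 (min 1 u)"

lemma clamp01_in[simp]: "clamp01 u \<in> {0..1}" by (simp add: clamp01_def)
lemma clamp01_ge[simp]: "0 \<le> clamp01 u" by (simp add: clamp01_def)
lemma clamp01_le[simp]: "clamp01 u \<le> 1" by (simp add: clamp01_def)
lemma clamp01_id[simp]: "u \<in> {0..1} \<Longrightarrow> clamp01 u = u" by (simp add: clamp01_def)
lemma continuous_clamp01: "continuous_on UNIV clamp01"
  unfolding clamp01_def by (intro continuous_intros)
lemma clamp01_meas[measurable]: "clamp01 \<in> borel_measurable borel"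
  using continuous_clamp01 by (rule borel_measurable_continuous_onI)
lemma clamp01_meas_restr: "clamp01 \<in> borel \<rightarrow>\<^sub>M restrict_space borel {0..1}"
  by (rule measurable_restrict_space2) auto

lemma tendsto_fun_iff:
  fixes f :: "'c \<Rightarrow> 'a \<Rightarrow> 'b::topological_space"
  shows "(f \<longlongrightarrow> l) F \<longleftrightarrow> (\<forall>i. ((\<lambda>a. f a i) \<longlongrightarrow> l i) F)"
  using limitin_componentwise[of "\<lambda>_. euclidean" UNIV f l F]
  by (simp add: euclidean_product_topology)

definition Kcube :: "(nat \<Rightarrow> real) set" where "Kcube = {x. \<forall>i. x i \<in> {0..1}}"

lemma compact_Kcube: "compact Kcube"
proof -
  have "Kcube = PiE UNIV (\<lambda>_. {0..1})" unfolding Kcube_def by (auto simp: PiE_def)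
  moreover have "compactin (product_topology (\<lambda>_. euclidean) UNIV) (PiE UNIV (\<lambda>_. {0..1::real}))"
    by (simp add: compactin_PiE)
  ultimately show ?thesis by (metis compactin_euclidean_iff euclidean_product_topology)
qed

definition clampK :: "(nat \<Rightarrow> real) \<Rightarrow> (nat \<Rightarrow> real)" where "clampK x = (\<lambda>i. clamp01 (x i))"

lemma continuous_clampK: "continuous_on UNIV clampK"
  unfolding clampK_def
  by (intro continuous_on_coordinatewise_then_product continuous_on_compose2[OF continuous_clamp01]
      continuous_on_product_coordinates) auto

lemma clampK_in: "clampK x \<in> Kcube" by (simp add: clampK_def Kcube_def)
lemma clampK_id: "x \<in> Kcube \<Longrightarrow> clampK x = x" by (simp add: clampK_def Kcube_def)

definition kern :: "(nat \<Rightarrow> real \<Rightarrow> real measure) \<Rightarrow> bool" where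
  "kern \<psi> \<longleftrightarrow> (\<forall>j. \<psi> j \<in> borel \<rightarrow>\<^sub>M prob_algebra borel) \<and> (\<forall>j u. AE y in \<psi> j u. y \<in> {0..1})"

lemma kern_meas: "kern \<psi> \<Longrightarrow> \<psi> j \<in> borel \<rightarrow>\<^sub>M prob_algebra borel" by (simp add: kern_def)
lemma kern_AE: "kern \<psi> \<Longrightarrow> AE y in \<psi> j u. y \<in> {0..1}" by (simp add: kern_def)
lemma kern_space: "kern \<psi> \<Longrightarrow> \<psi> j u \<in> space (prob_algebra borel)"
  using measurable_space[OF kern_meas] by auto
lemma kern_prob: "kern \<psi> \<Longrightarrow> prob_space (\<psi> j u)"
  using kern_space[of \<psi> j u] by (simp add: space_prob_algebra)
lemma kern_sets: "kern \<psi> \<Longrightarrow> sets (\<psi> j u) = sets borel"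
  using kern_space[of \<psi> j u] by (simp add: space_prob_algebra)

fun Rk :: "(nat \<Rightarrow> real \<Rightarrow> real measure) \<Rightarrow> nat \<Rightarrow> nat \<Rightarrow> real \<Rightarrow> (nat \<Rightarrow> real) measure" where
  "Rk \<psi> i 0 u = return PS (\<lambda>_. u)"
| "Rk \<psi> i (Suc m) u = \<psi> (Suc i) u \<bind> (\<lambda>y. distr (Rk \<psi> (Suc i) m y) PS (\<lambda>x. x(i := u)))"

lemma upd_meas[measurable]: "(\<lambda>(u, x). x(i := u)) \<in> (borel :: real measure) \<Otimes>\<^sub>M PS \<rightarrow>\<^sub>M PS"
proof -
  have "(\<lambda>p. (snd p)(i := fst p)) \<in> (borel :: real measure) \<Otimes>\<^sub>M PS \<rightarrow>\<^sub>M PS"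
    by (rule measurable_fun_upd[where J=UNIV]) auto
  then show ?thesis by (simp add: split_beta')
qed

lemma upd_meas2: "g \<in> N \<rightarrow>\<^sub>M borel \<Longrightarrow> f \<in> N \<rightarrow>\<^sub>M PS \<Longrightarrow> (\<lambda>p. (f p)(i := g p)) \<in> N \<rightarrow>\<^sub>M PS"
  by (rule measurable_fun_upd[where J=UNIV]) auto

lemma Rk_meas: "kern \<psi> \<Longrightarrow> Rk \<psi> i m \<in> borel \<rightarrow>\<^sub>M prob_algebra PS"
proof (induction m arbitrary: i)
  case 0
  have "(\<lambda>u::real. \<lambda>_::nat. u) \<in> borel \<rightarrow>\<^sub>M PS" by (rule measurable_PiM_single') auto
  then show ?case by (simp add: measurable_compose[OF _ measurable_return_prob_space])
next
  case (Suc m)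
  have 0: "(\<lambda>p. distr (Rk \<psi> (Suc i) m (snd p)) PS (\<lambda>x. x(i := fst p))) \<in> (borel \<Otimes>\<^sub>M borel) \<rightarrow>\<^sub>M prob_algebra PS"
  proof (rule measurable_distr_prob_space2[where M=PS])
    show "(\<lambda>p. Rk \<psi> (Suc i) m (snd p)) \<in> borel \<Otimes>\<^sub>M borel \<rightarrow>\<^sub>M prob_algebra PS"
      by (rule measurable_compose[OF measurable_snd Suc.IH[OF Suc.prems]])
    show "(\<lambda>(p, x). x(i := fst p)) \<in> (borel \<Otimes>\<^sub>M borel) \<Otimes>\<^sub>M PS \<rightarrow>\<^sub>M PS"
      unfolding split_beta' by (intro upd_meas2) auto
  qed
  have 1: "(\<lambda>(u, y). distr (Rk \<psi> (Suc i) m y) PS (\<lambda>x. x(i := u))) \<in> (borel \<Otimes>\<^sub>M borel) \<rightarrow>\<^sub>M prob_algebra PS"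
    using 0 by (simp add: split_beta')
  show ?case unfolding Rk.simps
    by (rule measurable_bind_prob_space2[OF kern_meas[OF Suc.prems] 1])
qed

lemma Rk_space: "kern \<psi> \<Longrightarrow> Rk \<psi> i m u \<in> space (prob_algebra PS)"
  using measurable_space[OF Rk_meas] by auto
lemma Rk_prob: "kern \<psi> \<Longrightarrow> prob_space (Rk \<psi> i m u)"
  using Rk_space[of \<psi> i m u] by (simp add: space_prob_algebra)
lemma Rk_sets: "kern \<psi> \<Longrightarrow> sets (Rk \<psi> i m u) = sets PS"
  using Rk_space[of \<psi> i m u] by (simp add: space_prob_algebra)

definition cyl :: "nat \<Rightarrow> nat \<Rightarrow> (nat \<Rightarrow> real set) \<Rightarrow> (nat \<Rightarrow> real) set" where
  "cyl i m B = {x \<in> space PS. \<forall>l\<in>{i..i+m}. x l \<in> B l}"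

lemma cyl_sets: assumes B[measurable]: "\<And>l. B l \<in> sets borel" shows "cyl i m B \<in> sets PS"
  unfolding cyl_def by measurable

lemma Rk_kernel_meas:
  assumes "kern \<psi>"
  shows "(\<lambda>y. distr (Rk \<psi> (Suc i) m y) PS (\<lambda>x. x(i := u))) \<in> borel \<rightarrow>\<^sub>M prob_algebra PS"
proof (rule measurable_distr_prob_space2[where M=PS])
  show "Rk \<psi> (Suc i) m \<in> borel \<rightarrow>\<^sub>M prob_algebra PS" by (rule Rk_meas[OF assms])
  show "(\<lambda>(y, x). x(i := u)) \<in> borel \<Otimes>\<^sub>M PS \<rightarrow>\<^sub>M PS"
    unfolding split_beta' by (intro upd_meas2) auto
qed

lemma Rk_cyl:
  assumes k: "kern \<psi>" and agree: "\<And>j u. j \<ge> 1 \<Longrightarrow> u \<in> {0..1} \<Longrightarrow> \<psi> j u = \<psi>' j u"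
    and B: "\<And>l. B l \<in> sets borel"
  shows "u \<in> {0..1} \<Longrightarrow> emeasure (Rk \<psi> i m u) (cyl i m B) = mc_cyl \<psi>' B i m u"
proof (induction m arbitrary: i u)
  case 0
  have "emeasure (Rk \<psi> i 0 u) (cyl i 0 B) = indicator (cyl i 0 B) (\<lambda>_. u)"
    using cyl_sets[OF B] by simp
  also have "\<dots> = indicator (B i) u"
    by (simp add: cyl_def indicator_def space_PiM)
  finally show ?case by simp
next
  case (Suc m)
  have pre: "(\<lambda>x. x(i := u)) -` cyl i (Suc m) B \<inter> space PS = (if u \<in> B i then cyl (Suc i) m B else {})"
    by (auto simp: cyl_def space_PiM PiE_def extensional_def)
  have "emeasure (Rk \<psi> i (Suc m) u) (cyl i (Suc m) B) =
      (\<integral>\<^sup>+ y. emeasure (distr (Rk \<psi> (Suc i) m y) PS (\<lambda>x. x(i := u))) (cyl i (Suc m) B) \<partial>\<psi> (Suc i) u)"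
    unfolding Rk.simps
    by (rule emeasure_bind_prob_algebra[OF kern_space[OF k] Rk_kernel_meas[OF k] cyl_sets[OF B]])
  also have "\<dots> = (\<integral>\<^sup>+ y. indicator (B i) u * emeasure (Rk \<psi> (Suc i) m y) (cyl (Suc i) m B) \<partial>\<psi> (Suc i) u)"
  proof (rule nn_integral_cong)
    fix y
    have "emeasure (distr (Rk \<psi> (Suc i) m y) PS (\<lambda>x. x(i := u))) (cyl i (Suc m) B) =
        emeasure (Rk \<psi> (Suc i) m y) ((\<lambda>x. x(i := u)) -` cyl i (Suc m) B \<inter> space (Rk \<psi> (Suc i) m y))"
    proof (rule emeasure_distr[OF _ cyl_sets[OF B]])
      show "(\<lambda>x. x(i := u)) \<in> Rk \<psi> (Suc i) m y \<rightarrow>\<^sub>M PS"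
        by (simp add: measurable_cong_sets[OF Rk_sets[OF k] refl])
    qed
    also have "\<dots> = indicator (B i) u * emeasure (Rk \<psi> (Suc i) m y) (cyl (Suc i) m B)"
      using sets_eq_imp_space_eq[OF Rk_sets[OF k]] pre by (simp add: indicator_def)
    finally show "emeasure (distr (Rk \<psi> (Suc i) m y) PS (\<lambda>x. x(i := u))) (cyl i (Suc m) B) =
        indicator (B i) u * emeasure (Rk \<psi> (Suc i) m y) (cyl (Suc i) m B)" .
  qed
  also have "\<dots> = (\<integral>\<^sup>+ y. indicator (B i) u * mc_cyl \<psi>' B (Suc i) m y \<partial>\<psi> (Suc i) u)"
    using kern_AE[OF k, of "Suc i" u] by (intro nn_integral_cong_AE) (elim AE_mp, intro AE_I2, simp add: Suc.IH)
  also have "\<dots> = indicator (B i) u * (\<integral>\<^sup>+ y. mc_cyl \<psi>' B (Suc i) m y \<partial>\<psi>' (Suc i) u)"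
    using agree[of "Suc i" u] Suc.prems by (cases "u \<in> B i") simp_all
  finally show ?case by simp
qed

lemma integral_abs_le:
  fixes F :: "'b \<Rightarrow> real"
  assumes "prob_space M" "F \<in> borel_measurable M" "\<And>x. \<bar>F x\<bar> \<le> B"
  shows "\<bar>\<integral>x. F x \<partial>M\<bar> \<le> B"
proof -
  have "0 \<le> B" using assms(3) by (rule order_trans[OF abs_ge_zero])
  have "\<bar>(\<integral>x. F x \<partial>M) - (\<integral>x. 0 \<partial>M)\<bar> \<le> B"
    by (rule integral_diff_small[OF assms(1,2)]) (use assms(3) \<open>0 \<le> B\<close> in auto)
  then show ?thesis by simp
qed

lemma kernel_integral_meas:
  assumes K: "K \<in> N \<rightarrow>\<^sub>M prob_algebra L" and F: "F \<in> borel_measurable L"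
  shows "(\<lambda>y. \<integral>x. (F x :: real) \<partial>K y) \<in> borel_measurable N"
  using measurable_compose[OF measurable_prob_algebraD[OF K] integral_measurable_subprob_algebra[OF F]] .

lemma Rk_Suc_integral:
  fixes g :: "(nat \<Rightarrow> real) \<Rightarrow> real"
  assumes k: "kern \<psi>" and g: "g \<in> borel_measurable PS" and gb: "\<And>x. \<bar>g x\<bar> \<le> B"
  shows "(\<integral>x. g x \<partial>Rk \<psi> i (Suc m) u) = (\<integral>y. (\<integral>x. g (x(i := u)) \<partial>Rk \<psi> (Suc i) m y) \<partial>\<psi> (Suc i) u)"
proof -
  interpret P: prob_space "\<psi> (Suc i) u" by (rule kern_prob[OF k])
  have "(\<integral>x. g x \<partial>Rk \<psi> i (Suc m) u) = (\<integral>y. (\<integral>x. g x \<partial>distr (Rk \<psi> (Suc i) m y) PS (\<lambda>x. x(i := u))) \<partial>\<psi> (Suc i) u)"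
    unfolding Rk.simps
  proof (rule integral_bind[OF g])
    show "\<And>x. x \<in> space PS \<Longrightarrow> \<bar>g x\<bar> \<le> B" using gb by simp
    show "(\<lambda>y. distr (Rk \<psi> (Suc i) m y) PS (\<lambda>x. x(i := u))) \<in> \<psi> (Suc i) u \<rightarrow>\<^sub>M subprob_algebra PS"
      using measurable_prob_algebraD[OF Rk_kernel_meas[OF k]]
      by (simp add: measurable_cong_sets[OF kern_sets[OF k] refl])
    show "finite_measure (\<psi> (Suc i) u)" by (rule P.finite_measure_axioms)
    show "AE x in \<psi> (Suc i) u. emeasure (distr (Rk \<psi> (Suc i) m x) PS (\<lambda>x. x(i := u))) (space (distr (Rk \<psi> (Suc i) m x) PS (\<lambda>x. x(i := u)))) \<le> ennreal 1"
    proof (intro AE_I2)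
      fix y
      have "(\<lambda>x. x(i := u)) \<in> Rk \<psi> (Suc i) m y \<rightarrow>\<^sub>M PS"
        by (simp add: measurable_cong_sets[OF Rk_sets[OF k] refl] upd_meas2)
      from prob_space.prob_space_distr[OF Rk_prob[OF k] this]
      show "emeasure (distr (Rk \<psi> (Suc i) m y) PS (\<lambda>x. x(i := u))) (space (distr (Rk \<psi> (Suc i) m y) PS (\<lambda>x. x(i := u)))) \<le> ennreal 1"
        by (metis prob_space.emeasure_space_1 order_refl ennreal_1)
    qed
  qed
  also have "\<dots> = (\<integral>y. (\<integral>x. g (x(i := u)) \<partial>Rk \<psi> (Suc i) m y) \<partial>\<psi> (Suc i) u)"
  proof (rule Bochner_Integration.integral_cong[OF refl])
    fix y
    show "(\<integral>x. g x \<partial>distr (Rk \<psi> (Suc i) m y) PS (\<lambda>x. x(i := u))) = (\<integral>x. g (x(i := u)) \<partial>Rk \<psi> (Suc i) m y)"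
      by (rule integral_distr[OF _ g]) (simp add: measurable_cong_sets[OF Rk_sets[OF k] refl] upd_meas2)
  qed
  finally show ?thesis .
qed

lemma tendsto_upd:
  fixes xs :: "nat \<Rightarrow> nat \<Rightarrow> real"
  assumes "xs \<longlonglongrightarrow> x" "us \<longlonglongrightarrow> u"
  shows "(\<lambda>n. (xs n)(i := us n)) \<longlonglongrightarrow> x(i := u)"
  using assms unfolding tendsto_fun_iff[of xs] tendsto_fun_iff[of "\<lambda>n. (xs n)(i := us n)"] by auto

lemma Rk_conv:
  assumes ks: "\<And>n. kern (\<psi>s n)" and k: "kern \<psi>"
    and conv: "\<And>j u us. j \<ge> 1 \<Longrightarrow> u \<in> {0..1} \<Longrightarrow> (\<forall>n. us n \<in> {0..1}) \<Longrightarrow> us \<longlonglongrightarrow> u \<Longrightarrow>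
        weak_conv_seq (\<lambda>n. \<psi>s n j (us n)) (\<psi> j u)"
  shows "u \<in> {0..1} \<Longrightarrow> (\<forall>n. us n \<in> {0..1}) \<Longrightarrow> us \<longlonglongrightarrow> u \<Longrightarrow>
    (\<And>n. gs n \<in> borel_measurable PS) \<Longrightarrow> g \<in> borel_measurable PS \<Longrightarrow>
    (\<And>n x. \<bar>gs n x\<bar> \<le> B) \<Longrightarrow> (\<And>x. \<bar>g x\<bar> \<le> B) \<Longrightarrow> cconv UNIV gs g \<Longrightarrow>
    (\<lambda>n. \<integral>x. gs n x \<partial>Rk (\<psi>s n) i m (us n)) \<longlonglongrightarrow> (\<integral>x. g x \<partial>Rk \<psi> i m u)"
proof (induction m arbitrary: i u us gs g)
  case 0
  have c: "(\<lambda>n. (\<lambda>_::nat. us n)) \<longlonglongrightarrow> (\<lambda>_. u)"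
    using 0(3) unfolding tendsto_fun_iff[of "\<lambda>n. (\<lambda>_::nat. us n)"] by simp
  have "(\<lambda>n. gs n (\<lambda>_. us n)) \<longlonglongrightarrow> g (\<lambda>_. u)"
    by (rule cconvD[OF 0(8) _ _ c]) auto
  then show ?case using 0 by (simp add: integral_return space_PiM)
next
  case (Suc m)
  define h where "h n y = (\<integral>x. gs n (x(i := us n)) \<partial>Rk (\<psi>s n) (Suc i) m y)" for n y
  define h0 where "h0 y = (\<integral>x. g (x(i := u)) \<partial>Rk \<psi> (Suc i) m y)" for y
  have gsm: "(\<lambda>x. gs n (x(i := v))) \<in> borel_measurable PS" for n v
    by (intro measurable_compose[OF _ Suc.prems(4)] upd_meas2) auto
  have gm: "(\<lambda>x. g (x(i := v))) \<in> borel_measurable PS" for v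
    by (intro measurable_compose[OF _ Suc.prems(5)] upd_meas2) auto
  have eq1: "(\<integral>x. gs n x \<partial>Rk (\<psi>s n) i (Suc m) (us n)) = (\<integral>y. h n y \<partial>\<psi>s n (Suc i) (us n))" for n
    unfolding h_def by (rule Rk_Suc_integral[OF ks Suc.prems(4,6)])
  have eq0: "(\<integral>x. g x \<partial>Rk \<psi> i (Suc m) u) = (\<integral>y. h0 y \<partial>\<psi> (Suc i) u)"
    unfolding h0_def by (rule Rk_Suc_integral[OF k Suc.prems(5,7)])
  have "(\<lambda>n. \<integral>y. h n y \<partial>\<psi>s n (Suc i) (us n)) \<longlonglongrightarrow> (\<integral>y. h0 y \<partial>\<psi> (Suc i) u)"
  proof (rule weak_conv_cconv[where K="{0..1}" and r=clamp01 and B=B])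
    show "compact {0..1::real}" by simp
    show "continuous_on UNIV clamp01" by (rule continuous_clamp01)
    show "\<And>y. clamp01 y \<in> {0..1}" "\<And>y. y \<in> {0..1} \<Longrightarrow> clamp01 y = y" by simp_all
    show "\<And>n. prob_space (\<psi>s n (Suc i) (us n))" "prob_space (\<psi> (Suc i) u)" using ks k by (simp_all add: kern_prob)
    show "\<And>n. sets (\<psi>s n (Suc i) (us n)) = sets borel" "sets (\<psi> (Suc i) u) = sets borel" using ks k by (simp_all add: kern_sets)
    show "\<And>n. AE x in \<psi>s n (Suc i) (us n). x \<in> {0..1}" "AE x in \<psi> (Suc i) u. x \<in> {0..1}" using kern_AE[OF ks] kern_AE[OF k] by blast+
    show "weak_conv_seq (\<lambda>n. \<psi>s n (Suc i) (us n)) (\<psi> (Suc i) u)" using Suc.prems by (intro conv) auto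
    show "\<And>n. h n \<in> borel_measurable borel" unfolding h_def
      by (rule kernel_integral_meas[OF Rk_meas[OF ks] gsm])
    show "h0 \<in> borel_measurable borel" unfolding h0_def
      by (rule kernel_integral_meas[OF Rk_meas[OF k] gm])
    show "\<bar>h n y\<bar> \<le> B" for n y unfolding h_def
      by (rule integral_abs_le[OF Rk_prob[OF ks]]) (simp_all add: measurable_cong_sets[OF Rk_sets[OF ks] refl] gsm Suc.prems(6))
    show "\<bar>h0 y\<bar> \<le> B" for y unfolding h0_def
      by (rule integral_abs_le[OF Rk_prob[OF k]]) (simp_all add: measurable_cong_sets[OF Rk_sets[OF k] refl] gm Suc.prems(7))
    show "cconv {0..1} h h0"
      unfolding cconv_def
    proof (intro allI impI)
      fix ys y assume ys: "\<forall>n. ys n \<in> {0..1::real}" "y \<in> {0..1}" "ys \<longlonglongrightarrow> y"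
      have cc: "cconv UNIV (\<lambda>n x. gs n (x(i := us n))) (\<lambda>x. g (x(i := u)))"
        unfolding cconv_def
      proof (intro allI impI)
        fix xs x assume "xs \<longlonglongrightarrow> (x :: nat \<Rightarrow> real)"
        then have lim: "(\<lambda>n. (xs n)(i := us n)) \<longlonglongrightarrow> x(i := u)" using Suc.prems(3) by (rule tendsto_upd)
        show "(\<lambda>n. gs n ((xs n)(i := us n))) \<longlonglongrightarrow> g (x(i := u))"
          by (rule cconvD[OF Suc.prems(8) _ _ lim]) auto
      qed
      show "(\<lambda>n. h n (ys n)) \<longlonglongrightarrow> h0 y" unfolding h_def h0_def
        by (rule Suc.IH[OF ys(2) ys(1) ys(3) gsm gm _ _ cc]) (simp_all add: Suc.prems(6,7))
    qed
  qed
  then show ?case unfolding eq1 eq0 .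
qed



definition psic :: "(nat \<Rightarrow> real \<Rightarrow> real measure) \<Rightarrow> nat \<Rightarrow> real \<Rightarrow> real measure" where
  "psic \<psi> j u = (if j = 0 then return borel 0 else \<psi> j (clamp01 u))"

lemma lp_space: "length_params \<pi> \<psi> \<Longrightarrow> j \<ge> 1 \<Longrightarrow> u \<in> {0..1} \<Longrightarrow> \<psi> j u \<in> space (prob_algebra borel)"
  unfolding length_params_def using measurable_space[of "\<psi> j" "restrict_space borel {0..1}" "prob_algebra borel" u]
  by (auto simp: space_restrict_space)

lemma kern_psic:
  assumes lp: "length_params \<pi> \<psi>"
  shows "kern (psic \<psi>)"
  unfolding kern_def
proof (intro conjI allI)
  fix j
  show "psic \<psi> j \<in> borel \<rightarrow>\<^sub>M prob_algebra borel"
  proof (cases "j = 0")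
    case True
    have "return borel (0::real) \<in> space (prob_algebra borel)"
      by (simp add: space_prob_algebra prob_space_return)
    then have "(\<lambda>_. return borel (0::real)) \<in> borel \<rightarrow>\<^sub>M prob_algebra borel" by (rule measurable_const)
    moreover have "psic \<psi> 0 = (\<lambda>_. return borel 0)" by (simp add: psic_def fun_eq_iff)
    ultimately show ?thesis using True by simp
  next
    case False
    then have "\<psi> j \<in> restrict_space borel {0..1} \<rightarrow>\<^sub>M prob_algebra borel" using lp by (simp add: length_params_def)
    moreover have "psic \<psi> j = (\<lambda>x. \<psi> j (clamp01 x))" using False by (simp add: psic_def fun_eq_iff)
    ultimately show ?thesis using measurable_compose[OF clamp01_meas_restr] by metis
  qed
next
  fix j u
  show "AE y in psic \<psi> j u. y \<in> {0..1}"
  proof (cases "j = 0")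
    case True
    have "AE y in return borel (0::real). y \<in> {0..1}" by (subst AE_return) auto
    moreover have "psic \<psi> j u = return borel 0" using True by (simp add: psic_def)
    ultimately show ?thesis by (simp only:)
  next
    case False
    then have sp: "\<psi> j (clamp01 u) \<in> space (prob_algebra borel)" using lp_space[OF lp] by simp
    then interpret prob_space "\<psi> j (clamp01 u)" by (simp add: space_prob_algebra)
    have "emeasure (\<psi> j (clamp01 u)) {0..1} = 1" using lp False by (simp add: length_params_def)
    moreover have "{0..1::real} \<in> sets (\<psi> j (clamp01 u))" using sp by (simp add: space_prob_algebra)
    ultimately have "AE y in \<psi> j (clamp01 u). y \<in> {0..1}"
      by (intro AE_prob_1) (simp add: emeasure_eq_measure)
    moreover have "psic \<psi> j u = \<psi> j (clamp01 u)" using False by (simp add: psic_def)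
    ultimately show ?thesis by (simp only:)
  qed
qed

lemma psic_agree: "j \<ge> 1 \<Longrightarrow> u \<in> {0..1} \<Longrightarrow> psic \<psi> j u = \<psi> j u"
  by (simp add: psic_def)

definition trunc :: "nat \<Rightarrow> (nat \<Rightarrow> real) \<Rightarrow> (nat \<Rightarrow> real)" where
  "trunc k x = (\<lambda>l. if l \<le> k then x l else 0)"

lemma trunc_meas[measurable]: "trunc k \<in> PS \<rightarrow>\<^sub>M PS"
  unfolding trunc_def by (rule measurable_PiM_single') auto

lemma continuous_trunc: "continuous_on UNIV (trunc k)"
  unfolding trunc_def
proof (intro continuous_on_coordinatewise_then_product)
  fix i show "continuous_on UNIV (\<lambda>x::nat\<Rightarrow>real. if i \<le> k then x i else 0)"
    by (cases "i \<le> k") auto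
qed

lemma space_PS: "space PS = UNIV" by (simp add: space_PiM)

lemma marg_eq:
  assumes P: "sets P = sets PS" "finite_measure P" and Q: "sets Q = sets PS"
    and eq: "\<And>B. (\<And>l. B l \<in> sets borel) \<Longrightarrow> emeasure P (cyl 0 k B) = emeasure Q (cyl 0 k B)"
  shows "distr P PS (trunc k) = distr Q PS (trunc k)"
proof (rule measure_eqI_PiM_infinite)
  show "sets (distr P PS (trunc k)) = sets PS" "sets (distr Q PS (trunc k)) = sets PS" by simp_all
  show "finite_measure (distr P PS (trunc k))"
    using P by (intro finite_measure.finite_measure_distr) (simp_all add: measurable_cong_sets[OF P(1) refl])
  fix A and J :: "nat set" assume J: "finite J" "J \<subseteq> UNIV" and A: "\<And>i. i \<in> J \<Longrightarrow> A i \<in> sets (borel :: real measure)"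
  define X where "X = prod_emb UNIV (\<lambda>_. borel :: real measure) J (Pi\<^sub>E J A)"
  have X: "X \<in> sets PS" unfolding X_def using J A by (intro sets_PiM_I) auto
  define B where "B l = (if l \<in> J then A l else UNIV)" for l
  have B: "B l \<in> sets borel" for l using A by (simp add: B_def)
  have pre: "trunc k -` X \<inter> space PS = (if \<exists>j\<in>J. k < j \<and> 0 \<notin> A j then {} else cyl 0 k B)"
    by (auto simp: X_def prod_emb_iff space_PS trunc_def cyl_def B_def PiE_def extensional_def Pi_iff split: if_splits; force)
  have "emeasure (distr P PS (trunc k)) X = emeasure P (trunc k -` X \<inter> space PS)"
    using X P(1) by (simp add: emeasure_distr measurable_cong_sets[OF P(1) refl] sets_eq_imp_space_eq[OF P(1)])
  also have "\<dots> = emeasure Q (trunc k -` X \<inter> space PS)"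
    unfolding pre using eq[OF B] by simp
  also have "\<dots> = emeasure (distr Q PS (trunc k)) X"
    using X Q by (simp add: emeasure_distr measurable_cong_sets[OF Q refl] sets_eq_imp_space_eq[OF Q])
  finally show "emeasure (distr P PS (trunc k)) X = emeasure (distr Q PS (trunc k)) X" .
qed

lemma AE_of_emeasure_1:
  assumes "prob_space M" "A \<in> sets M" "emeasure M A = 1"
  shows "AE x in M. x \<in> A"
proof -
  interpret prob_space M by fact
  show ?thesis using assms by (intro AE_prob_1) (simp add: emeasure_eq_measure)
qed

lemma lp_pi_space: "length_params \<pi> \<psi> \<Longrightarrow> \<pi> \<in> space (prob_algebra borel)"
  by (simp add: length_params_def space_prob_algebra)

lemma lp_AE: "length_params \<pi> \<psi> \<Longrightarrow> AE u in \<pi>. u \<in> {0..1}"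
  unfolding length_params_def by (intro AE_of_emeasure_1) auto

lemma chain_integral_trunc:
  fixes g :: "(nat \<Rightarrow> real) \<Rightarrow> real"
  assumes mc: "markov_chain_law \<pi> \<psi> \<mu>" and lp: "length_params \<pi> \<psi>"
    and g: "g \<in> borel_measurable PS" and gb: "\<And>x. \<bar>g x\<bar> \<le> B"
  shows "(\<integral>x. g (trunc k x) \<partial>\<mu>) = (\<integral>u. (\<integral>x. g (trunc k x) \<partial>Rk (psic \<psi>) 0 k u) \<partial>\<pi>)"
proof -
  define Q where "Q = \<pi> \<bind> Rk (psic \<psi>) 0 k"
  have k: "kern (psic \<psi>)" by (rule kern_psic[OF lp])
  have pis: "\<pi> \<in> space (prob_algebra borel)" by (rule lp_pi_space[OF lp])
  have Rm: "Rk (psic \<psi>) 0 k \<in> borel \<rightarrow>\<^sub>M prob_algebra PS" by (rule Rk_meas[OF k])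
  have mus: "sets \<mu> = sets PS" "prob_space \<mu>" using mc by (simp_all add: markov_chain_law_def)
  have Qs: "sets Q = sets PS" unfolding Q_def by (rule sets_bind'[OF pis Rm])
  have pisets: "sets \<pi> = sets borel" using lp by (simp add: length_params_def)
  have eq: "distr \<mu> PS (trunc k) = distr Q PS (trunc k)"
  proof (rule marg_eq[OF mus(1) _ Qs])
    show "finite_measure \<mu>" using mus(2) by (simp add: prob_space.finite_measure)
    fix B :: "nat \<Rightarrow> real set" assume B: "\<And>l. B l \<in> sets (borel :: real measure)"
    have "cyl 0 k B = {x \<in> space \<mu>. \<forall>i\<le>k. x i \<in> B i}"
      by (auto simp: cyl_def sets_eq_imp_space_eq[OF mus(1)])
    then have "emeasure \<mu> (cyl 0 k B) = (\<integral>\<^sup>+ u. mc_cyl \<psi> B 0 k u \<partial>\<pi>)"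
      using mc B by (simp add: markov_chain_law_def)
    also have "\<dots> = (\<integral>\<^sup>+ u. emeasure (Rk (psic \<psi>) 0 k u) (cyl 0 k B) \<partial>\<pi>)"
    proof (intro nn_integral_cong_AE)
      have "\<And>u. u \<in> {0..1} \<Longrightarrow> mc_cyl \<psi> B 0 k u = emeasure (Rk (psic \<psi>) 0 k u) (cyl 0 k B)"
        by (rule Rk_cyl[OF k psic_agree B, symmetric])
      then show "AE u in \<pi>. mc_cyl \<psi> B 0 k u = emeasure (Rk (psic \<psi>) 0 k u) (cyl 0 k B)"
        using lp_AE[OF lp] by (elim AE_mp) (intro AE_I2 impI, simp)
    qed
    also have "\<dots> = emeasure Q (cyl 0 k B)"
      unfolding Q_def by (rule emeasure_bind_prob_algebra[OF pis Rm cyl_sets[OF B], symmetric])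
    finally show "emeasure \<mu> (cyl 0 k B) = emeasure Q (cyl 0 k B)" .
  qed
  have "(\<integral>x. g (trunc k x) \<partial>\<mu>) = (\<integral>x. g x \<partial>distr \<mu> PS (trunc k))"
    by (rule integral_distr[symmetric]) (simp_all add: measurable_cong_sets[OF mus(1) refl] g)
  also have "\<dots> = (\<integral>x. g x \<partial>distr Q PS (trunc k))" by (simp add: eq)
  also have "\<dots> = (\<integral>x. g (trunc k x) \<partial>Q)"
    by (rule integral_distr) (simp_all add: measurable_cong_sets[OF Qs refl] g)
  also have "\<dots> = (\<integral>u. (\<integral>x. g (trunc k x) \<partial>Rk (psic \<psi>) 0 k u) \<partial>\<pi>)"
    unfolding Q_def
  proof (rule integral_bind)
    show "(\<lambda>x. g (trunc k x)) \<in> borel_measurable PS" using g by simp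
    show "\<And>x. x \<in> space PS \<Longrightarrow> \<bar>g (trunc k x)\<bar> \<le> B" using gb by simp
    show "Rk (psic \<psi>) 0 k \<in> \<pi> \<rightarrow>\<^sub>M subprob_algebra PS"
      using measurable_prob_algebraD[OF Rm] by (simp add: measurable_cong_sets[OF pisets refl])
    show "finite_measure \<pi>" using lp by (simp add: length_params_def prob_space.finite_measure)
    show "AE x in \<pi>. emeasure (Rk (psic \<psi>) 0 k x) (space (Rk (psic \<psi>) 0 k x)) \<le> ennreal 1"
      by (intro AE_I2) (simp add: prob_space.emeasure_space_1[OF Rk_prob[OF k]])
  qed
  finally show ?thesis .
qed

lemma cconv_const_cont:
  fixes g :: "'b::metric_space \<Rightarrow> real"
  assumes "continuous_on UNIV g" shows "cconv UNIV (\<lambda>_. g) g"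
  unfolding cconv_def using assms
  by (auto intro: continuous_on_tendsto_compose[of UNIV g, unfolded o_def])

lemma borel_PS: "f \<in> borel_measurable (borel :: (nat \<Rightarrow> real) measure) \<Longrightarrow> f \<in> borel_measurable PS"
  using measurable_cong_sets[OF sets_PiM_equal_borel refl] by blast

lemma cconv_trunc:
  fixes f :: "(nat \<Rightarrow> real) \<Rightarrow> real"
  assumes "continuous_on UNIV f"
  shows "cconv Kcube (\<lambda>k x. f (trunc k x)) f"
  unfolding cconv_def
proof (intro allI impI)
  fix xs x assume lim: "xs \<longlonglongrightarrow> (x :: nat \<Rightarrow> real)"
  have "(\<lambda>k. trunc k (xs k)) \<longlonglongrightarrow> x"
    unfolding tendsto_fun_iff[of "\<lambda>k. trunc k (xs k)"]
  proof
    fix l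
    have "(\<lambda>k. xs k l) \<longlonglongrightarrow> x l" using lim unfolding tendsto_fun_iff[of xs] by blast
    moreover have "eventually (\<lambda>k. xs k l = trunc k (xs k) l) sequentially"
      unfolding eventually_sequentially trunc_def by (intro exI[of _ l]) auto
    ultimately show "(\<lambda>k. trunc k (xs k) l) \<longlonglongrightarrow> x l" by (rule Lim_transform_eventually)
  qed
  then show "(\<lambda>k. f (trunc k (xs k))) \<longlonglongrightarrow> f x"
    using assms by (auto intro: continuous_on_tendsto_compose[of UNIV f, unfolded o_def])
qed

lemma chain_conv:
  fixes \<mu>s :: "nat \<Rightarrow> (nat \<Rightarrow> real) measure"
  assumes mcs: "\<And>n. markov_chain_law (\<pi>s n) (\<psi>s n) (\<mu>s n)" "\<And>n. length_params (\<pi>s n) (\<psi>s n)"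
    and mc: "markov_chain_law \<pi> \<psi> \<mu>" "length_params \<pi> \<psi>"
    and AEs: "\<And>n. AE x in \<mu>s n. x \<in> Kcube" and AE0: "AE x in \<mu>. x \<in> Kcube"
    and cpi: "weak_conv_seq \<pi>s \<pi>"
    and cpsi: "\<And>j u us. j \<ge> 1 \<Longrightarrow> u \<in> {0..1} \<Longrightarrow> (\<forall>n. us n \<in> {0..1}) \<Longrightarrow> us \<longlonglongrightarrow> u \<Longrightarrow>
        weak_conv_seq (\<lambda>n. \<psi>s n j (us n)) (\<psi> j u)"
  shows "weak_conv_seq \<mu>s \<mu>"
  unfolding weak_conv_seq_def
proof (intro allI impI, elim conjE)
  fix f :: "(nat \<Rightarrow> real) \<Rightarrow> real"
  assume fc: "continuous_on UNIV f" and fbd: "bounded (range f)"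
  then obtain c where fb: "\<And>x. \<bar>f x\<bar> \<le> c" unfolding bounded_real by blast
  have fm: "f \<in> borel_measurable PS" using fc by (intro borel_PS borel_measurable_continuous_onI)
  have fTm: "(\<lambda>x. f (trunc k x)) \<in> borel_measurable PS" for k using fm by simp
  have ks: "kern (psic (\<psi>s n))" for n by (rule kern_psic[OF mcs(2)])
  have k: "kern (psic \<psi>)" by (rule kern_psic[OF mc(2)])
  have musets: "sets (\<mu>s n) = sets PS" "prob_space (\<mu>s n)" for n using mcs(1)[of n] by (simp_all add: markov_chain_law_def)
  have musets0: "sets \<mu> = sets PS" "prob_space \<mu>" using mc(1) by (simp_all add: markov_chain_law_def)
  have cpsi': "weak_conv_seq (\<lambda>n. psic (\<psi>s n) j (us n)) (psic \<psi> j u)"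
    if "j \<ge> 1" "u \<in> {0..1}" "\<forall>n. us n \<in> {0..1}" "us \<longlonglongrightarrow> u" for j u us
  proof -
    have "(\<lambda>n. psic (\<psi>s n) j (us n)) = (\<lambda>n. \<psi>s n j (us n))" using that by (simp add: psic_agree)
    then show ?thesis using cpsi[OF that] that by (simp add: psic_agree)
  qed
  have fin: "(\<lambda>n. \<integral>x. f (trunc k x) \<partial>\<mu>s n) \<longlonglongrightarrow> (\<integral>x. f (trunc k x) \<partial>\<mu>)" for k
  proof -
    have gc: "continuous_on UNIV (\<lambda>x. f (trunc k x))"
      using continuous_on_compose2[OF fc continuous_trunc] by simp
    have "(\<lambda>n. \<integral>u. (\<integral>x. f (trunc k x) \<partial>Rk (psic (\<psi>s n)) 0 k u) \<partial>\<pi>s n)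
        \<longlonglongrightarrow> (\<integral>u. (\<integral>x. f (trunc k x) \<partial>Rk (psic \<psi>) 0 k u) \<partial>\<pi>)"
    proof (rule weak_conv_cconv[where K="{0..1}" and r=clamp01 and B=c])
      show "compact {0..1::real}" by simp
      show "continuous_on UNIV clamp01" by (rule continuous_clamp01)
      show "\<And>y. clamp01 y \<in> {0..1}" "\<And>y. y \<in> {0..1} \<Longrightarrow> clamp01 y = y" by simp_all
      show "\<And>n. prob_space (\<pi>s n)" "prob_space \<pi>" "\<And>n. sets (\<pi>s n) = sets borel" "sets \<pi> = sets borel"
        using mcs(2) mc(2) by (simp_all add: length_params_def)
      show "\<And>n. AE x in \<pi>s n. x \<in> {0..1}" "AE x in \<pi>. x \<in> {0..1}"
        using lp_AE[OF mcs(2)] lp_AE[OF mc(2)] by blast+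
      show "weak_conv_seq \<pi>s \<pi>" by (rule cpi)
      show "\<And>n. (\<lambda>u. \<integral>x. f (trunc k x) \<partial>Rk (psic (\<psi>s n)) 0 k u) \<in> borel_measurable borel"
        by (rule kernel_integral_meas[OF Rk_meas[OF ks] fTm])
      show "(\<lambda>u. \<integral>x. f (trunc k x) \<partial>Rk (psic \<psi>) 0 k u) \<in> borel_measurable borel"
        by (rule kernel_integral_meas[OF Rk_meas[OF k] fTm])
      show "\<bar>\<integral>x. f (trunc k x) \<partial>Rk (psic (\<psi>s n)) 0 k u\<bar> \<le> c" for n u
        by (rule integral_abs_le[OF Rk_prob[OF ks]]) (simp_all add: measurable_cong_sets[OF Rk_sets[OF ks] refl] fTm fb)
      show "\<bar>\<integral>x. f (trunc k x) \<partial>Rk (psic \<psi>) 0 k u\<bar> \<le> c" for u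
        by (rule integral_abs_le[OF Rk_prob[OF k]]) (simp_all add: measurable_cong_sets[OF Rk_sets[OF k] refl] fTm fb)
      show "cconv {0..1} (\<lambda>n u. \<integral>x. f (trunc k x) \<partial>Rk (psic (\<psi>s n)) 0 k u) (\<lambda>u. \<integral>x. f (trunc k x) \<partial>Rk (psic \<psi>) 0 k u)"
        unfolding cconv_def
      proof (intro allI impI)
        fix us u assume us: "\<forall>n. us n \<in> {0..1::real}" "u \<in> {0..1}" "us \<longlonglongrightarrow> u"
        show "(\<lambda>n. \<integral>x. f (trunc k x) \<partial>Rk (psic (\<psi>s n)) 0 k (us n)) \<longlonglongrightarrow> (\<integral>x. f (trunc k x) \<partial>Rk (psic \<psi>) 0 k u)"
          by (rule Rk_conv[where B=c, OF ks k cpsi' us(2) us(1) us(3) fTm fTm _ _ cconv_const_cont[OF gc]]) (simp_all add: fb)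
      qed
    qed
    moreover have "(\<integral>x. f (trunc k x) \<partial>\<mu>s n) = (\<integral>u. (\<integral>x. f (trunc k x) \<partial>Rk (psic (\<psi>s n)) 0 k u) \<partial>\<pi>s n)" for n
      by (rule chain_integral_trunc[OF mcs(1) mcs(2) fm fb])
    moreover have "(\<integral>x. f (trunc k x) \<partial>\<mu>) = (\<integral>u. (\<integral>x. f (trunc k x) \<partial>Rk (psic \<psi>) 0 k u) \<partial>\<pi>)"
      by (rule chain_integral_trunc[OF mc fm fb])
    ultimately show ?thesis by simp
  qed
  have tr: "\<bar>(\<integral>x. f (trunc k x) \<partial>M) - (\<integral>x. f x \<partial>M)\<bar> \<le> e"
    if "\<forall>x\<in>Kcube. \<bar>f (trunc k x) - f x\<bar> < e" "sets M = sets PS" "prob_space M" "AE x in M. x \<in> Kcube" for k e M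
  proof (rule integral_diff_small[where B=c, OF that(3)])
    show "(\<lambda>x. f (trunc k x)) \<in> borel_measurable M" "f \<in> borel_measurable M"
      using fm by (simp_all add: measurable_cong_sets[OF that(2) refl])
    show "AE x in M. \<bar>f (trunc k x) - f x\<bar> \<le> e" using that(4) by eventually_elim (use that(1) in auto)
  qed (use fb in auto)
  show "(\<lambda>n. \<integral>x. f x \<partial>\<mu>s n) \<longlonglongrightarrow> (\<integral>x. f x \<partial>\<mu>)"
    unfolding lim_sequentially
  proof (intro allI impI)
    fix e :: real assume e: "e > 0"
    then have "e/3 > 0" by simp
    from cconv_unif[OF cconv_trunc[OF fc] compact_Kcube this] obtain k where
      k3: "\<forall>x\<in>Kcube. \<bar>f (trunc k x) - f x\<bar> < e/3"
      unfolding eventually_sequentially by blast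
    from fin[of k] \<open>e/3 > 0\<close> obtain N where N: "\<And>n. n \<ge> N \<Longrightarrow> dist (\<integral>x. f (trunc k x) \<partial>\<mu>s n) (\<integral>x. f (trunc k x) \<partial>\<mu>) < e/3"
      unfolding lim_sequentially by blast
    have "dist (\<integral>x. f x \<partial>\<mu>s n) (\<integral>x. f x \<partial>\<mu>) < e" if "n \<ge> N" for n
    proof -
      have a: "\<bar>(\<integral>x. f (trunc k x) \<partial>\<mu>s n) - (\<integral>x. f x \<partial>\<mu>s n)\<bar> \<le> e/3"
        by (rule tr[OF k3 musets AEs])
      have b: "\<bar>(\<integral>x. f (trunc k x) \<partial>\<mu>) - (\<integral>x. f x \<partial>\<mu>)\<bar> \<le> e/3"
        by (rule tr[OF k3 musets0 AE0])
      show ?thesis using a b N[OF that] unfolding dist_real_def by arith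
    qed
    then show "\<exists>no. \<forall>n\<ge>no. dist (\<integral>x. f x \<partial>\<mu>s n) (\<integral>x. f x \<partial>\<mu>) < e" by blast
  qed
qed



definition sbd :: "(nat \<Rightarrow> real) \<Rightarrow> nat \<Rightarrow> real" where
  "sbd w j = (case j of 0 \<Rightarrow> 1 - suminf w | Suc i \<Rightarrow> w i)"

definition sbK :: "(nat \<Rightarrow> 'a::topological_space) \<Rightarrow> 'a measure \<Rightarrow> nat \<Rightarrow> 'a measure" where
  "sbK \<theta> P0 j = (case j of 0 \<Rightarrow> P0 | Suc i \<Rightarrow> return borel (\<theta> i))"

lemma sbd_nonneg: "(\<And>j. w j \<ge> 0) \<Longrightarrow> suminf w \<le> 1 \<Longrightarrow> sbd w j \<ge> 0"
  by (simp add: sbd_def split: nat.split)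

lemma sbd_sums: "summable w \<Longrightarrow> sbd w sums 1"
proof -
  assume "summable w"
  then have "(\<lambda>n. sbd w (Suc n)) sums suminf w" by (simp add: sbd_def summable_sums)
  from sums_Suc[OF this] show ?thesis by (simp add: sbd_def[abs_def])
qed

lemma sbK_meas:
  assumes P0: "prob_space P0" "sets P0 = sets borel"
  shows "sbK \<theta> P0 \<in> count_space UNIV \<rightarrow>\<^sub>M subprob_algebra borel"
proof -
  have "sbK \<theta> P0 j \<in> space (subprob_algebra borel)" for j
    using P0 by (cases j) (auto simp: sbK_def space_subprob_algebra prob_space_imp_subprob_space subprob_space_return)
  then show ?thesis by (simp add: measurable_count_space_eq1)
qed

lemma sb_measure_bind:
  fixes w :: "nat \<Rightarrow> real" and \<theta> :: "nat \<Rightarrow> 'a::topological_space"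
  assumes w: "\<And>j. w j \<ge> 0" "summable w" "suminf w \<le> 1" and P0: "prob_space P0" "sets P0 = sets borel"
  shows "sb_measure w \<theta> P0 = density (count_space UNIV) (\<lambda>j. ennreal (sbd w j)) \<bind> sbK \<theta> P0"
proof -
  let ?D = "density (count_space UNIV) (\<lambda>j. ennreal (sbd w j))"
  let ?K = "sbK \<theta> P0"
  have Km: "?K \<in> ?D \<rightarrow>\<^sub>M subprob_algebra borel"
    using sbK_meas[OF P0] by (simp add: measurable_cong_sets[OF sets_density refl])
  have Dne: "space ?D \<noteq> {}" by simp
  have sets: "sets (?D \<bind> ?K) = sets borel" by (rule sets_bind[OF sets_kernel[OF Km] Dne])
  have sp: "space (?D \<bind> ?K) = UNIV" using sets_eq_imp_space_eq[OF sets] by simp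
  have em: "emeasure (?D \<bind> ?K) A = (\<Sum>j. ennreal (w j) * indicator A (\<theta> j)) + ennreal (1 - (\<Sum>j. w j)) * emeasure P0 A"
    if A: "A \<in> sets borel" for A
  proof -
    have "emeasure (?D \<bind> ?K) A = (\<integral>\<^sup>+ j. emeasure (?K j) A \<partial>?D)"
      by (rule emeasure_bind[OF Dne Km A])
    also have "\<dots> = (\<integral>\<^sup>+ j. ennreal (sbd w j) * emeasure (?K j) A \<partial>count_space UNIV)"
      by (simp add: nn_integral_density)
    also have "\<dots> = (\<Sum>j. ennreal (sbd w j) * emeasure (?K j) A)"
      by (rule nn_integral_count_space_nat)
    also have "\<dots> = (\<Sum>j. ennreal (sbd w (Suc j)) * emeasure (?K (Suc j)) A) + ennreal (sbd w 0) * emeasure (?K 0) A"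
      by (rule sums_unique[symmetric], rule sums_Suc, rule summable_sums) simp
    also have "\<dots> = (\<Sum>j. ennreal (w j) * indicator A (\<theta> j)) + ennreal (1 - (\<Sum>j. w j)) * emeasure P0 A"
      using A by (simp add: sbd_def sbK_def)
    finally show ?thesis .
  qed
  have "sb_measure w \<theta> P0 = measure_of UNIV (sets borel) (emeasure (?D \<bind> ?K))"
    unfolding sb_measure_def
    by (rule measure_of_eq) (auto simp: em sets.sigma_sets_eq[of borel, simplified])
  also have "\<dots> = ?D \<bind> ?K"
    using measure_of_of_measure[of "?D \<bind> ?K"] by (simp add: sets sp)
  finally show ?thesis .
qed

lemma sb_integral:
  fixes w :: "nat \<Rightarrow> real" and \<theta> :: "nat \<Rightarrow> 'a::topological_space" and f :: "'a \<Rightarrow> real"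
  assumes w: "\<And>j. w j \<ge> 0" "summable w" "suminf w \<le> 1" and P0: "prob_space P0" "sets P0 = sets borel"
    and f: "f \<in> borel_measurable borel" and fb: "\<And>x. \<bar>f x\<bar> \<le> c"
  shows "(\<integral>x. f x \<partial>sb_measure w \<theta> P0) = (\<Sum>j. w j * f (\<theta> j)) + (1 - suminf w) * (\<integral>x. f x \<partial>P0)"
proof -
  let ?D = "density (count_space UNIV) (\<lambda>j. ennreal (sbd w j))"
  let ?K = "sbK \<theta> P0"
  define F where "F j = (\<integral>x. f x \<partial>?K j)" for j
  have Km: "?K \<in> ?D \<rightarrow>\<^sub>M subprob_algebra borel"
    using sbK_meas[OF P0] by (simp add: measurable_cong_sets[OF sets_density refl])
  have sd: "summable (sbd w)" using sbd_sums[OF w(2)] by (rule sums_summable)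
  have dnn: "sbd w j \<ge> 0" for j by (rule sbd_nonneg[OF w(1,3)])
  have "emeasure ?D (space ?D) = (\<Sum>j. ennreal (sbd w j))"
    by (simp add: emeasure_density nn_integral_count_space_nat)
  also have "\<dots> = ennreal 1"
    using suminf_ennreal2[OF dnn sd] sums_unique[OF sbd_sums[OF w(2)]] by simp
  finally have fin: "finite_measure ?D" by (intro finite_measureI) simp
  have Fb: "\<bar>F j\<bar> \<le> c" for j
  proof -
    have "prob_space (?K j)" using P0 by (cases j) (simp_all add: sbK_def prob_space_return)
    moreover have "sets (?K j) = sets borel" using P0 by (cases j) (simp_all add: sbK_def)
    ultimately show ?thesis unfolding F_def
      using f by (intro integral_abs_le) (simp_all add: fb cong: measurable_cong_sets)
  qed
  have "(\<integral>x. f x \<partial>sb_measure w \<theta> P0) = (\<integral>x. f x \<partial>(?D \<bind> ?K))"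
    by (simp add: sb_measure_bind[OF w P0])
  also have "\<dots> = (\<integral>j. F j \<partial>?D)" unfolding F_def
  proof (rule integral_bind[OF f _ Km fin])
    show "\<And>x. x \<in> space borel \<Longrightarrow> \<bar>f x\<bar> \<le> c" using fb by simp
    show "AE x in ?D. emeasure (?K x) (space (?K x)) \<le> ennreal 1"
      using P0 by (intro AE_I2) (auto simp: sbK_def prob_space.emeasure_space_1 split: nat.split)
  qed
  also have "\<dots> = (\<integral>j. sbd w j * F j \<partial>count_space UNIV)"
    by (subst integral_density) (simp_all add: dnn)
  also have "\<dots> = (\<Sum>j. sbd w j * F j)"
  proof (rule integral_count_space_nat)
    have "summable (\<lambda>j. sbd w j * c)" using sd by (rule summable_mult2)
    moreover have "norm (norm (sbd w j * F j)) \<le> sbd w j * c" for j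
      using Fb[of j] dnn[of j] by (simp add: abs_mult mult_left_mono)
    ultimately show "integrable (count_space UNIV) (\<lambda>j. sbd w j * F j)"
      unfolding integrable_count_space_nat_iff by (rule summable_comparison_test'[where N=0])
  qed
  also have "\<dots> = (\<Sum>j. sbd w (Suc j) * F (Suc j)) + sbd w 0 * F 0"
  proof -
    have "summable (\<lambda>j. sbd w j * F j)"
    proof (rule summable_comparison_test'[where N=0])
      show "summable (\<lambda>j. sbd w j * c)" using sd by (rule summable_mult2)
      show "norm (sbd w j * F j) \<le> sbd w j * c" for j
        using Fb[of j] dnn[of j] by (simp add: abs_mult mult_left_mono)
    qed
    then show ?thesis using suminf_split_head[of "\<lambda>j. sbd w j * F j"] by simp
  qed
  also have "\<dots> = (\<Sum>j. w j * f (\<theta> j)) + (1 - suminf w) * (\<integral>x. f x \<partial>P0)"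
    by (simp add: sbd_def F_def sbK_def integral_return f)
  finally show ?thesis .
qed



lemma sbw_partial: "(\<Sum>j<N. sb_weights v j) = 1 - (\<Prod>i<N. 1 - v i)"
  by (induction N) (simp_all add: sb_weights_def algebra_simps)

lemma sbw_nonneg: "v \<in> Kcube \<Longrightarrow> sb_weights v j \<ge> 0"
  unfolding sb_weights_def Kcube_def by (auto intro!: mult_nonneg_nonneg prod_nonneg)

lemma prod_Kcube_nonneg: "v \<in> Kcube \<Longrightarrow> (\<Prod>i<N. 1 - v i) \<ge> 0"
  unfolding Kcube_def by (auto intro!: prod_nonneg)

lemma prod_Kcube_le1: "v \<in> Kcube \<Longrightarrow> (\<Prod>i<N. 1 - v i) \<le> 1"
  unfolding Kcube_def by (auto intro!: prod_le_1)

lemma sbw_summable: "v \<in> Kcube \<Longrightarrow> summable (sb_weights v)"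
  by (rule summableI_nonneg_bounded[where x=1]) (auto simp: sbw_nonneg sbw_partial prod_Kcube_nonneg)

lemma sbw_suminf_le: "v \<in> Kcube \<Longrightarrow> suminf (sb_weights v) \<le> 1"
  by (rule suminf_le_const[OF sbw_summable]) (auto simp: sbw_partial prod_Kcube_nonneg)

definition Yf :: "('a::topological_space \<Rightarrow> real) \<Rightarrow> 'a measure \<Rightarrow> (nat \<Rightarrow> real) \<Rightarrow> (nat \<Rightarrow> 'a) \<Rightarrow> real" where
  "Yf f P0 v \<theta> = (\<integral>x. f x \<partial>sb_measure (sb_weights v) \<theta> P0)"

lemma Yf_formula:
  assumes v: "v \<in> Kcube" and P0: "prob_space P0" "sets P0 = sets borel"
    and f: "f \<in> borel_measurable borel" and fb: "\<And>x. \<bar>f x\<bar> \<le> c"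
  shows "Yf f P0 v \<theta> = (\<Sum>j. sb_weights v j * f (\<theta> j)) + (1 - suminf (sb_weights v)) * (\<integral>x. f x \<partial>P0)"
  unfolding Yf_def
  by (rule sb_integral[OF sbw_nonneg[OF v] sbw_summable[OF v] sbw_suminf_le[OF v] P0 f fb])

lemma sbw_f_summable:
  assumes v: "v \<in> Kcube" and fb: "\<And>x. \<bar>f x\<bar> \<le> c"
  shows "summable (\<lambda>j. sb_weights v j * f (\<theta> j))"
proof (rule summable_comparison_test'[where N=0])
  show "summable (\<lambda>j. sb_weights v j * c)" by (rule summable_mult2[OF sbw_summable[OF v]])
  show "norm (sb_weights v j * f (\<theta> j)) \<le> sb_weights v j * c" for j
    using sbw_nonneg[OF v, of j] fb[of "\<theta> j"] by (simp add: abs_mult mult_left_mono)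
qed

lemma Yf_trunc:
  assumes v: "v \<in> Kcube" and P0: "prob_space P0" "sets P0 = sets borel"
    and f: "f \<in> borel_measurable borel" and fb: "\<And>x. \<bar>f x\<bar> \<le> c"
    and pr: "sb_weights v sums 1"
  shows "\<bar>Yf f P0 v \<theta> - (\<Sum>j<N. sb_weights v j * f (\<theta> j))\<bar> \<le> c * (\<Prod>i<N. 1 - v i)"
proof -
  have s1: "suminf (sb_weights v) = 1" using pr by (rule sums_unique[symmetric])
  have sm: "summable (\<lambda>j. sb_weights v j * f (\<theta> j))" by (rule sbw_f_summable[OF v fb])
  have Y: "Yf f P0 v \<theta> = (\<Sum>j. sb_weights v j * f (\<theta> j))"
    using Yf_formula[OF v P0 f fb] s1 by simp
  have "Yf f P0 v \<theta> - (\<Sum>j<N. sb_weights v j * f (\<theta> j)) = (\<Sum>j. sb_weights v (j + N) * f (\<theta> (j + N)))"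
    unfolding Y using suminf_split_initial_segment[OF sm, of N] by simp
  also have "\<bar>\<dots>\<bar> \<le> (\<Sum>j. sb_weights v (j + N) * c)"
  proof -
    have sc: "summable (\<lambda>j. sb_weights v (j + N) * c)"
      using summable_mult2[OF sbw_summable[OF v]] by (rule summable_ignore_initial_segment)
    have le: "\<bar>sb_weights v (j + N) * f (\<theta> (j + N))\<bar> \<le> sb_weights v (j + N) * c" for j
      using sbw_nonneg[OF v, of "j + N"] fb[of "\<theta> (j + N)"] by (simp add: abs_mult mult_left_mono)
    have sa: "summable (\<lambda>j. \<bar>sb_weights v (j + N) * f (\<theta> (j + N))\<bar>)"
      by (rule summable_comparison_test'[OF sc, where N=0]) (use le in simp)
    have "\<bar>\<Sum>j. sb_weights v (j + N) * f (\<theta> (j + N))\<bar> \<le> (\<Sum>j. \<bar>sb_weights v (j + N) * f (\<theta> (j + N))\<bar>)"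
      by (rule summable_rabs[OF sa])
    also have "\<dots> \<le> (\<Sum>j. sb_weights v (j + N) * c)"
      by (rule suminf_le[OF le sa sc])
    finally show ?thesis .
  qed
  also have "\<dots> = c * (\<Prod>i<N. 1 - v i)"
  proof -
    have "(\<Sum>j. sb_weights v (j + N)) = 1 - (\<Sum>j<N. sb_weights v j)"
      using suminf_split_initial_segment[OF sbw_summable[OF v], of N] s1 by simp
    moreover have "(\<Sum>j. sb_weights v (j + N) * c) = (\<Sum>j. sb_weights v (j + N)) * c"
      using summable_ignore_initial_segment[OF sbw_summable[OF v], of N] by (rule suminf_mult2[symmetric])
    ultimately show ?thesis by (simp add: sbw_partial mult.commute)
  qed
  finally show ?thesis .
qed

abbreviation PA :: "(nat \<Rightarrow> 'a::topological_space) measure" where "PA \<equiv> PiM UNIV (\<lambda>_. borel)"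

definition Gf :: "('a::topological_space \<Rightarrow> real) \<Rightarrow> 'a measure \<Rightarrow> (nat \<Rightarrow> real) \<Rightarrow> (nat \<Rightarrow> 'a) \<Rightarrow> real" where
  "Gf f P0 v \<theta> = (\<Sum>j. sb_weights (clampK v) j * f (\<theta> j)) + (1 - suminf (sb_weights (clampK v))) * (\<integral>x. f x \<partial>P0)"

lemma Gf_meas:
  assumes f[measurable]: "f \<in> borel_measurable borel"
  shows "(\<lambda>p. Gf f P0 (fst p) (snd p)) \<in> borel_measurable (PS \<Otimes>\<^sub>M PA)"
  unfolding Gf_def sb_weights_def clampK_def clamp01_def by measurable

lemma Yf_Gf:
  assumes v: "v \<in> Kcube" and P0: "prob_space P0" "sets P0 = sets borel"
    and f: "f \<in> borel_measurable borel" and fb: "\<And>x. \<bar>f x\<bar> \<le> c"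
  shows "Yf f P0 v \<theta> = Gf f P0 v \<theta>"
  using Yf_formula[OF v P0 f fb] by (simp add: Gf_def clampK_id[OF v])

definition chi :: "'a measure \<Rightarrow> ('a \<Rightarrow> real) \<Rightarrow> real \<Rightarrow> complex" where
  "chi P f s = (\<integral>\<theta>. iexp (s * f \<theta>) \<partial>P)"

lemma iexp_sum: "iexp (t * (\<Sum>j<(N::nat). a j)) = (\<Prod>j<N. iexp (t * a j))"
proof -
  have "iexp (t * (\<Sum>j<N. a j)) = exp (\<Sum>j<N. \<i> * complex_of_real (t * a j))"
    by (simp add: sum_distrib_left of_real_sum)
  also have "\<dots> = (\<Prod>j<N. iexp (t * a j))" by (rule exp_sum) simp
  finally show ?thesis .
qed

lemma indep_char:
  fixes V :: "'w \<Rightarrow> nat \<Rightarrow> real" and \<Theta> :: "'w \<Rightarrow> nat \<Rightarrow> 'a::topological_space"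
  assumes M: "prob_space M" and VT: "(\<lambda>\<omega>. (V \<omega>, \<Theta> \<omega>)) \<in> M \<rightarrow>\<^sub>M PS \<Otimes>\<^sub>M PA"
    and dist: "distr M (PS \<Otimes>\<^sub>M PA) (\<lambda>\<omega>. (V \<omega>, \<Theta> \<omega>)) = distr M PS V \<Otimes>\<^sub>M PiM UNIV (\<lambda>_. P0)"
    and P0: "prob_space P0" "sets P0 = sets borel" and f[measurable]: "f \<in> borel_measurable borel"
  shows "(\<integral>\<omega>. iexp (t * (\<Sum>j<N. sb_weights (V \<omega>) j * f (\<Theta> \<omega> j))) \<partial>M)
       = (\<integral>v. (\<Prod>j<N. chi P0 f (t * sb_weights v j)) \<partial>distr M PS V)"
proof -
  let ?\<mu> = "distr M PS V" and ?Q = "PiM UNIV (\<lambda>_::nat. P0)"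
  define \<Phi> where "\<Phi> p = iexp (t * (\<Sum>j<N. sb_weights (fst p) j * f (snd p j)))" for p :: "(nat \<Rightarrow> real) \<times> (nat \<Rightarrow> 'a)"
  have \<Phi>m: "\<Phi> \<in> borel_measurable (PS \<Otimes>\<^sub>M PA)" unfolding \<Phi>_def sb_weights_def by measurable
  have Vm: "V \<in> M \<rightarrow>\<^sub>M PS" using measurable_compose[OF VT measurable_fst] by simp
  interpret P0: prob_space P0 by (rule P0)
  interpret PP: product_prob_space "\<lambda>_::nat. P0" UNIV by unfold_locales
  interpret MU: prob_space ?\<mu> using M Vm by (rule prob_space.prob_space_distr)
  interpret PQ: pair_prob_space ?\<mu> ?Q ..
  have setsQ: "sets ?Q = sets PA" by (rule sets_PiM_cong) (simp_all add: P0)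
  have sets_pair: "sets (?\<mu> \<Otimes>\<^sub>M ?Q) = sets (PS \<Otimes>\<^sub>M PA)"
    by (rule sets_pair_measure_cong) (simp_all add: setsQ)
  have \<Phi>m': "\<Phi> \<in> borel_measurable (?\<mu> \<Otimes>\<^sub>M ?Q)"
    using \<Phi>m by (simp add: measurable_cong_sets[OF sets_pair refl])
  have \<Phi>b: "norm (\<Phi> p) \<le> 1" for p by (simp add: \<Phi>_def norm_exp_i_times)
  have int: "integrable (?\<mu> \<Otimes>\<^sub>M ?Q) \<Phi>"
    by (rule PQ.integrable_const_bound[where B=1]) (simp_all add: \<Phi>b \<Phi>m')
  have "(\<integral>\<omega>. iexp (t * (\<Sum>j<N. sb_weights (V \<omega>) j * f (\<Theta> \<omega> j))) \<partial>M) = (\<integral>\<omega>. \<Phi> (V \<omega>, \<Theta> \<omega>) \<partial>M)"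
    by (simp add: \<Phi>_def)
  also have "\<dots> = (\<integral>p. \<Phi> p \<partial>distr M (PS \<Otimes>\<^sub>M PA) (\<lambda>\<omega>. (V \<omega>, \<Theta> \<omega>)))"
    by (rule integral_distr[OF VT \<Phi>m, symmetric])
  also have "\<dots> = (\<integral>p. \<Phi> p \<partial>(?\<mu> \<Otimes>\<^sub>M ?Q))" by (simp add: dist)
  also have "\<dots> = (\<integral>v. (\<integral>\<theta>. \<Phi> (v, \<theta>) \<partial>?Q) \<partial>?\<mu>)" by (rule PQ.integral_fst'[OF int, symmetric])
  also have "\<dots> = (\<integral>v. (\<Prod>j<N. chi P0 f (t * sb_weights v j)) \<partial>?\<mu>)"
  proof (rule Bochner_Integration.integral_cong[OF refl])
    fix v
    define g where "g j \<theta> = iexp (t * sb_weights v j * f \<theta>)" for j \<theta>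
    have gm: "g j \<in> borel_measurable P0" for j unfolding g_def
      by (simp add: measurable_cong_sets[OF P0(2) refl])
    have gi: "integrable P0 (g j)" for j
      by (rule P0.integrable_const_bound[where B=1]) (simp_all add: gm g_def norm_exp_i_times)
    have "\<Phi> (v, \<theta>) = (\<Prod>j\<in>{..<N}. g j (\<theta> j))" for \<theta>
      unfolding \<Phi>_def g_def by (subst iexp_sum) (simp add: mult.assoc)
    then have "(\<integral>\<theta>. \<Phi> (v, \<theta>) \<partial>?Q) = (\<integral>\<theta>. (\<Prod>j\<in>{..<N}. g j (\<theta> j)) \<partial>?Q)"
      by simp
    also have "\<dots> = (\<integral>x. (\<Prod>j\<in>{..<N}. g j (x j)) \<partial>PiM {..<N} (\<lambda>_. P0))"
    proof -
      have rm: "(\<lambda>x. restrict x {..<N}) \<in> ?Q \<rightarrow>\<^sub>M PiM {..<N} (\<lambda>_. P0)" by measurable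
      have pm: "(\<lambda>x. \<Prod>j\<in>{..<N}. g j (x j)) \<in> borel_measurable (PiM {..<N} (\<lambda>_. P0))"
        using gm by measurable
      have "(\<integral>x. (\<Prod>j\<in>{..<N}. g j (x j)) \<partial>PiM {..<N} (\<lambda>_. P0))
          = (\<integral>x. (\<Prod>j\<in>{..<N}. g j (x j)) \<partial>distr ?Q (PiM {..<N} (\<lambda>_. P0)) (\<lambda>x. restrict x {..<N}))"
        by (simp add: PP.distr_PiM_restrict_finite)
      also have "\<dots> = (\<integral>\<theta>. (\<Prod>j\<in>{..<N}. g j (restrict \<theta> {..<N} j)) \<partial>?Q)"
        by (rule integral_distr[OF rm pm])
      also have "\<dots> = (\<integral>\<theta>. (\<Prod>j\<in>{..<N}. g j (\<theta> j)) \<partial>?Q)" by simp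
      finally show ?thesis by simp
    qed
    also have "\<dots> = (\<Prod>j\<in>{..<N}. integral\<^sup>L P0 (g j))"
      by (rule PP.product_integral_prod) (simp_all add: gi)
    also have "\<dots> = (\<Prod>j<N. chi P0 f (t * sb_weights v j))"
      unfolding g_def[abs_def] chi_def by (simp add: mult.assoc)
    finally show "(\<integral>\<theta>. \<Phi> (v, \<theta>) \<partial>?Q) = (\<Prod>j<N. chi P0 f (t * sb_weights v j))" .
  qed
  finally show ?thesis .
qed



lemma cmod_iexp_diff: "cmod (iexp a - iexp b) \<le> \<bar>a - b\<bar>"
proof -
  have "iexp a - iexp b = iexp b * (iexp (a - b) - 1)"
    by (simp add: algebra_simps exp_add[symmetric] of_real_diff)
  then have "cmod (iexp a - iexp b) = cmod (iexp (a - b) - 1)"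
    by (simp add: norm_mult norm_exp_i_times)
  also have "\<dots> \<le> \<bar>a - b\<bar>" using iexp_approx1[of "a - b" 0] by simp
  finally show ?thesis .
qed

lemma chi_bound:
  assumes "prob_space P" "sets P = sets borel" "f \<in> borel_measurable borel"
  shows "cmod (chi P f s) \<le> 1"
proof -
  interpret prob_space P by fact
  have "cmod (chi P f s) \<le> (\<integral>\<theta>. cmod (iexp (s * f \<theta>)) \<partial>P)"
    unfolding chi_def by (rule integral_norm_bound)
  also have "\<dots> = 1" by (simp add: norm_exp_i_times prob_space)
  finally show ?thesis .
qed

lemma chi_lip:
  assumes P: "prob_space P" "sets P = sets borel" and f: "f \<in> borel_measurable borel" and fb: "\<And>x. \<bar>f x\<bar> \<le> c"
  shows "cmod (chi P f s - chi P f s') \<le> c * \<bar>s - s'\<bar>"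
proof -
  interpret prob_space P by fact
  have fm: "f \<in> borel_measurable P" using f by (simp add: measurable_cong_sets[OF P(2) refl])
  have int: "integrable P (\<lambda>\<theta>. iexp (r * f \<theta>))" for r
  proof (rule integrable_const_bound[where B=1])
    show "(\<lambda>\<theta>. iexp (r * f \<theta>)) \<in> borel_measurable P" using fm by measurable
  qed (simp add: norm_exp_i_times)
  have "chi P f s - chi P f s' = (\<integral>\<theta>. iexp (s * f \<theta>) - iexp (s' * f \<theta>) \<partial>P)"
    unfolding chi_def using int by simp
  also have "cmod \<dots> \<le> (\<integral>\<theta>. cmod (iexp (s * f \<theta>) - iexp (s' * f \<theta>)) \<partial>P)"
    by (rule integral_norm_bound)
  also have "\<dots> \<le> (\<integral>\<theta>. c * \<bar>s - s'\<bar> \<partial>P)"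
  proof (rule integral_mono)
    show "integrable P (\<lambda>\<theta>. cmod (iexp (s * f \<theta>) - iexp (s' * f \<theta>)))" using int by auto
    show "integrable P (\<lambda>\<theta>. c * \<bar>s - s'\<bar>)" by simp
    fix \<theta>
    have "cmod (iexp (s * f \<theta>) - iexp (s' * f \<theta>)) \<le> \<bar>s * f \<theta> - s' * f \<theta>\<bar>" by (rule cmod_iexp_diff)
    also have "\<dots> = \<bar>s - s'\<bar> * \<bar>f \<theta>\<bar>" by (simp add: left_diff_distrib[symmetric] abs_mult)
    also have "\<dots> \<le> \<bar>s - s'\<bar> * c" using fb[of \<theta>] by (simp add: mult_left_mono)
    finally show "cmod (iexp (s * f \<theta>) - iexp (s' * f \<theta>)) \<le> c * \<bar>s - s'\<bar>" by (simp add: mult.commute)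
  qed
  also have "\<dots> = c * \<bar>s - s'\<bar>" by (simp add: prob_space)
  finally show ?thesis .
qed

lemma chi_conv:
  fixes f :: "'a::topological_space \<Rightarrow> real"
  assumes Ps: "\<And>n. prob_space (Ps n)" "\<And>n. sets (Ps n) = sets borel" and P: "prob_space P" "sets P = sets borel"
    and wc: "weak_conv_seq Ps P" and fc: "continuous_on UNIV f" and fb: "\<And>x. \<bar>f x\<bar> \<le> c"
  shows "(\<lambda>n. chi (Ps n) f s) \<longlonglongrightarrow> chi P f s"
proof -
  have f: "f \<in> borel_measurable borel" using fc by (rule borel_measurable_continuous_onI)
  have int: "integrable Q (\<lambda>\<theta>. iexp (s * f \<theta>))" if "prob_space Q" "sets Q = sets borel" for Q
  proof -
    interpret prob_space Q by fact
    have fm: "f \<in> borel_measurable Q" using f by (simp add: measurable_cong_sets[OF that(2) refl])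
    show ?thesis
    proof (rule integrable_const_bound[where B=1])
      show "(\<lambda>\<theta>. iexp (s * f \<theta>)) \<in> borel_measurable Q" using fm by measurable
    qed (simp add: norm_exp_i_times)
  qed
  have sf: "continuous_on UNIV (\<lambda>\<theta>. s * f \<theta>)" by (intro continuous_on_mult continuous_on_const fc)
  have cc: "continuous_on UNIV (\<lambda>\<theta>. cos (s * f \<theta>))" "continuous_on UNIV (\<lambda>\<theta>. sin (s * f \<theta>))"
    using continuous_on_compose2[OF continuous_on_cos[OF continuous_on_id] sf]
      continuous_on_compose2[OF continuous_on_sin[OF continuous_on_id] sf] by auto
  have bd: "bounded (range (\<lambda>\<theta>. cos (s * f \<theta>)))" "bounded (range (\<lambda>\<theta>. sin (s * f \<theta>)))"
    unfolding bounded_real by (auto intro!: exI[of _ 1])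
  have re: "(\<lambda>n. \<integral>\<theta>. cos (s * f \<theta>) \<partial>Ps n) \<longlonglongrightarrow> (\<integral>\<theta>. cos (s * f \<theta>) \<partial>P)"
    using wc cc(1) bd(1) unfolding weak_conv_seq_def by blast
  have im: "(\<lambda>n. \<integral>\<theta>. sin (s * f \<theta>) \<partial>Ps n) \<longlonglongrightarrow> (\<integral>\<theta>. sin (s * f \<theta>) \<partial>P)"
    using wc cc(2) bd(2) unfolding weak_conv_seq_def by blast
  have Re_chi: "Re (chi Q f s) = (\<integral>\<theta>. cos (s * f \<theta>) \<partial>Q)" and Im_chi: "Im (chi Q f s) = (\<integral>\<theta>. sin (s * f \<theta>) \<partial>Q)"
    if "prob_space Q" "sets Q = sets borel" for Q
  proof -
    have ri: "Re (iexp x) = cos x" "Im (iexp x) = sin x" for x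
      using Re_exp[of "\<i> * complex_of_real x"] Im_exp[of "\<i> * complex_of_real x"] by simp_all
    have "Re (chi Q f s) = (\<integral>\<theta>. Re (iexp (s * f \<theta>)) \<partial>Q)"
      unfolding chi_def by (rule integral_Re[OF int[OF that], symmetric])
    then show "Re (chi Q f s) = (\<integral>\<theta>. cos (s * f \<theta>) \<partial>Q)" by (simp only: ri)
    have "Im (chi Q f s) = (\<integral>\<theta>. Im (iexp (s * f \<theta>)) \<partial>Q)"
      unfolding chi_def by (rule integral_Im[OF int[OF that], symmetric])
    then show "Im (chi Q f s) = (\<integral>\<theta>. sin (s * f \<theta>) \<partial>Q)" by (simp only: ri)
  qed
  show ?thesis
    unfolding tendsto_complex_iff using re im Ps P by (simp add: Re_chi Im_chi)
qed



definition cconvC :: "'b::metric_space set \<Rightarrow> (nat \<Rightarrow> 'b \<Rightarrow> complex) \<Rightarrow> ('b \<Rightarrow> complex) \<Rightarrow> bool" where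
  "cconvC K h h0 \<longleftrightarrow> (\<forall>xs x. (\<forall>n. xs n \<in> K) \<longrightarrow> x \<in> K \<longrightarrow> xs \<longlonglongrightarrow> x \<longrightarrow> (\<lambda>n. h n (xs n)) \<longlonglongrightarrow> h0 x)"

lemma weak_conv_cconvC:
  fixes \<nu> :: "nat \<Rightarrow> 'b::metric_space measure" and h :: "nat \<Rightarrow> 'b \<Rightarrow> complex"
  assumes K: "compact K" and r: "continuous_on UNIV r" "\<And>x. r x \<in> K" "\<And>x. x \<in> K \<Longrightarrow> r x = x"
    and P: "\<And>n. prob_space (\<nu> n)" "\<And>n. sets (\<nu> n) = sets borel" "\<And>n. AE x in \<nu> n. x \<in> K"
    and P0: "prob_space \<nu>0" "sets \<nu>0 = sets borel" "AE x in \<nu>0. x \<in> K"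
    and wc: "weak_conv_seq \<nu> \<nu>0"
    and hm: "\<And>n. h n \<in> borel_measurable borel" "h0 \<in> borel_measurable borel"
    and hb: "\<And>n x. cmod (h n x) \<le> B" "\<And>x. cmod (h0 x) \<le> B"
    and cc: "cconvC K h h0"
  shows "(\<lambda>n. \<integral>x. h n x \<partial>\<nu> n) \<longlonglongrightarrow> (\<integral>x. h0 x \<partial>\<nu>0)"
proof -
  have int: "integrable Q g" if "prob_space Q" "sets Q = sets borel" "g \<in> borel_measurable borel" "\<And>x. cmod (g x) \<le> B"
    for Q and g :: "'b \<Rightarrow> complex"
  proof -
    interpret prob_space Q by fact
    show ?thesis using that by (intro integrable_const_bound[where B=B]) (simp_all add: measurable_cong_sets[OF that(2) refl])
  qed
  have re: "(\<lambda>n. \<integral>x. Re (h n x) \<partial>\<nu> n) \<longlonglongrightarrow> (\<integral>x. Re (h0 x) \<partial>\<nu>0)"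
  proof (rule weak_conv_cconv[OF K r P P0 wc])
    show "\<And>n. (\<lambda>x. Re (h n x)) \<in> borel_measurable borel" "(\<lambda>x. Re (h0 x)) \<in> borel_measurable borel"
      using hm by simp_all
    show "\<And>n x. \<bar>Re (h n x)\<bar> \<le> B" "\<And>x. \<bar>Re (h0 x)\<bar> \<le> B"
      using hb abs_Re_le_cmod order_trans by blast+
    show "cconv K (\<lambda>n x. Re (h n x)) (\<lambda>x. Re (h0 x))"
      using cc unfolding cconv_def cconvC_def by (auto intro: tendsto_Re)
  qed
  have im: "(\<lambda>n. \<integral>x. Im (h n x) \<partial>\<nu> n) \<longlonglongrightarrow> (\<integral>x. Im (h0 x) \<partial>\<nu>0)"
  proof (rule weak_conv_cconv[OF K r P P0 wc])
    show "\<And>n. (\<lambda>x. Im (h n x)) \<in> borel_measurable borel" "(\<lambda>x. Im (h0 x)) \<in> borel_measurable borel"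
      using hm by simp_all
    show "\<And>n x. \<bar>Im (h n x)\<bar> \<le> B" "\<And>x. \<bar>Im (h0 x)\<bar> \<le> B"
      using hb abs_Im_le_cmod order_trans by blast+
    show "cconv K (\<lambda>n x. Im (h n x)) (\<lambda>x. Im (h0 x))"
      using cc unfolding cconv_def cconvC_def by (auto intro: tendsto_Im)
  qed
  have i1: "integrable (\<nu> n) (h n)" for n by (rule int[OF P(1,2) hm(1) hb(1)])
  have i0: "integrable \<nu>0 h0" by (rule int[OF P0(1,2) hm(2) hb(2)])
  show ?thesis unfolding tendsto_complex_iff
    using re im by (simp add: integral_Re[OF i1] integral_Im[OF i1] integral_Re[OF i0] integral_Im[OF i0])
qed

lemma continuous_sbw: "continuous_on UNIV (\<lambda>v. sb_weights v j)"
  unfolding sb_weights_def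
  by (intro continuous_on_mult continuous_on_prod continuous_on_diff continuous_on_const continuous_on_product_coordinates)

lemma tendsto_sbw: "xs \<longlonglongrightarrow> x \<Longrightarrow> (\<lambda>n. sb_weights (xs n) j) \<longlonglongrightarrow> sb_weights x j"
  using continuous_on_tendsto_compose[OF continuous_sbw, of xs x sequentially j] by simp

lemma chi_cont:
  assumes P: "prob_space P" "sets P = sets borel" and f: "f \<in> borel_measurable borel" and fb: "\<And>x. \<bar>f x\<bar> \<le> c"
  shows "continuous_on UNIV (chi P f)"
proof (rule lipschitz_on_continuous_on)
  have "0 \<le> c" using fb by (rule order_trans[OF abs_ge_zero])
  then show "c-lipschitz_on UNIV (chi P f)"
    by (intro lipschitz_onI) (simp_all add: dist_norm chi_lip[OF P f fb])
qed

definition HN :: "'a measure \<Rightarrow> ('a \<Rightarrow> real) \<Rightarrow> real \<Rightarrow> nat \<Rightarrow> (nat \<Rightarrow> real) \<Rightarrow> complex" where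
  "HN P f t N v = (\<Prod>j<N. chi P f (t * sb_weights v j))"

lemma HN_bound:
  assumes "prob_space P" "sets P = sets borel" "f \<in> borel_measurable borel"
  shows "cmod (HN P f t N v) \<le> 1"
  unfolding HN_def prod_norm[symmetric] by (intro prod_le_1) (simp_all add: chi_bound[OF assms])

lemma HN_cont:
  assumes P: "prob_space P" "sets P = sets borel" and f: "f \<in> borel_measurable borel" and fb: "\<And>x. \<bar>f x\<bar> \<le> c"
  shows "continuous_on UNIV (HN P f t N)"
  unfolding HN_def
  by (intro continuous_on_prod continuous_on_compose2[OF chi_cont[OF P f fb]] continuous_on_mult continuous_on_const continuous_sbw) auto

lemma HN_meas:
  assumes P: "prob_space P" "sets P = sets borel" and f: "f \<in> borel_measurable borel" and fb: "\<And>x. \<bar>f x\<bar> \<le> c"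
  shows "HN P f t N \<in> borel_measurable borel"
  by (rule borel_measurable_continuous_onI[OF HN_cont[OF assms]])

lemma HN_cconv:
  fixes f :: "'a::topological_space \<Rightarrow> real"
  assumes Ps: "\<And>n. prob_space (Ps n)" "\<And>n. sets (Ps n) = sets borel" and P: "prob_space P" "sets P = sets borel"
    and wc: "weak_conv_seq Ps P" and fc: "continuous_on UNIV f" and fb: "\<And>x. \<bar>f x\<bar> \<le> c"
  shows "cconvC UNIV (\<lambda>n. HN (Ps n) f t N) (HN P f t N)"
  unfolding cconvC_def
proof (intro allI impI)
  fix xs and x :: "nat \<Rightarrow> real" assume lim: "xs \<longlonglongrightarrow> x"
  have f: "f \<in> borel_measurable borel" using fc by (rule borel_measurable_continuous_onI)
  have "(\<lambda>n. chi (Ps n) f (t * sb_weights (xs n) j)) \<longlonglongrightarrow> chi P f (t * sb_weights x j)" for j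
  proof -
    let ?s = "\<lambda>n. t * sb_weights (xs n) j"
    let ?sl = "t * sb_weights x j"
    have s: "?s \<longlonglongrightarrow> ?sl" by (intro tendsto_mult tendsto_const tendsto_sbw lim)
    have a: "(\<lambda>n. chi (Ps n) f ?sl) \<longlonglongrightarrow> chi P f ?sl" by (rule chi_conv[OF Ps P wc fc fb])
    have b: "(\<lambda>n. chi (Ps n) f (?s n) - chi (Ps n) f ?sl) \<longlonglongrightarrow> 0"
    proof (rule Lim_null_comparison)
      show "\<forall>\<^sub>F n in sequentially. norm (chi (Ps n) f (?s n) - chi (Ps n) f ?sl) \<le> c * \<bar>?s n - ?sl\<bar>"
        by (intro always_eventually allI chi_lip[OF Ps f fb])
      have "(\<lambda>n. c * \<bar>?s n - ?sl\<bar>) \<longlonglongrightarrow> c * \<bar>?sl - ?sl\<bar>"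
        by (intro tendsto_mult tendsto_const tendsto_rabs tendsto_diff s)
      then show "(\<lambda>n. c * \<bar>?s n - ?sl\<bar>) \<longlonglongrightarrow> 0" by simp
    qed
    have "(\<lambda>n. (chi (Ps n) f (?s n) - chi (Ps n) f ?sl) + chi (Ps n) f ?sl) \<longlonglongrightarrow> 0 + chi P f ?sl"
      by (intro tendsto_add a b)
    then show ?thesis by simp
  qed
  then show "(\<lambda>n. HN (Ps n) f t N (xs n)) \<longlonglongrightarrow> HN P f t N x"
    unfolding HN_def by (intro tendsto_prod) auto
qed



lemma pm_facts:
  fixes V :: "'w \<Rightarrow> nat \<Rightarrow> real" and \<Theta> :: "'w \<Rightarrow> nat \<Rightarrow> 'a::topological_space"
  assumes "proper_msbp M V \<Theta> \<pi> \<psi> P0"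
  shows "prob_space M" "length_params \<pi> \<psi>" "prob_space P0" "sets P0 = sets borel"
    "\<And>\<omega>. \<omega> \<in> space M \<Longrightarrow> V \<omega> \<in> Kcube"
    "markov_chain_law \<pi> \<psi> (distr M PS V)"
    "(\<lambda>\<omega>. (V \<omega>, \<Theta> \<omega>)) \<in> M \<rightarrow>\<^sub>M PS \<Otimes>\<^sub>M PA"
    "distr M (PS \<Otimes>\<^sub>M PA) (\<lambda>\<omega>. (V \<omega>, \<Theta> \<omega>)) = distr M PS V \<Otimes>\<^sub>M PiM UNIV (\<lambda>_. P0)"
    "AE \<omega> in M. sb_weights (V \<omega>) sums 1"
    "V \<in> M \<rightarrow>\<^sub>M PS" "\<Theta> \<in> M \<rightarrow>\<^sub>M PA"
  using assms unfolding proper_msbp_def diffuse_prob_def Kcube_def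
  by (auto dest: measurable_compose[OF _ measurable_fst] measurable_compose[OF _ measurable_snd])

lemma Kcube_sets: "{x \<in> space PS. x \<in> Kcube} \<in> sets PS"
  unfolding Kcube_def by measurable

lemma pm_AE_K:
  assumes "proper_msbp M V \<Theta> \<pi> \<psi> P0"
  shows "AE x in distr M PS V. x \<in> Kcube"
  using pm_facts[OF assms]
  by (subst AE_distr_iff[OF _ Kcube_sets]) (auto intro!: AE_I2)

lemma Y_meas:
  fixes V :: "'w \<Rightarrow> nat \<Rightarrow> real" and \<Theta> :: "'w \<Rightarrow> nat \<Rightarrow> 'a::topological_space"
  assumes pm: "proper_msbp M V \<Theta> \<pi> \<psi> P0" and f: "f \<in> borel_measurable borel" and fb: "\<And>x. \<bar>f x\<bar> \<le> c"
  shows "(\<lambda>\<omega>. Yf f P0 (V \<omega>) (\<Theta> \<omega>)) \<in> borel_measurable M"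
proof -
  note F = pm_facts[OF pm]
  have "(\<lambda>\<omega>. Gf f P0 (fst (V \<omega>, \<Theta> \<omega>)) (snd (V \<omega>, \<Theta> \<omega>))) \<in> borel_measurable M"
    by (rule measurable_compose[OF F(7) Gf_meas[OF f]])
  then show ?thesis
    by (rule measurable_cong[THEN iffD1, rotated]) (simp add: Yf_Gf[OF F(5) F(3,4) f fb])
qed

definition pN :: "nat \<Rightarrow> (nat \<Rightarrow> real) \<Rightarrow> real" where
  "pN N v = (\<Prod>i<N. 1 - clamp01 (v i))"

lemma pN_cont: "continuous_on UNIV (pN N)"
  unfolding pN_def
  by (intro continuous_on_prod continuous_on_diff continuous_on_const
      continuous_on_compose2[OF continuous_clamp01 continuous_on_product_coordinates]) auto

lemma pN_bound: "\<bar>pN N v\<bar> \<le> 1"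
proof -
  have "0 \<le> pN N v" "pN N v \<le> 1" unfolding pN_def by (auto intro!: prod_nonneg prod_le_1)
  then show ?thesis by simp
qed

lemma pN_K: "v \<in> Kcube \<Longrightarrow> pN N v = (\<Prod>i<N. 1 - v i)"
  by (simp add: pN_def Kcube_def)

lemma char_approx:
  fixes V :: "'w \<Rightarrow> nat \<Rightarrow> real" and \<Theta> :: "'w \<Rightarrow> nat \<Rightarrow> 'a::topological_space"
  assumes pm: "proper_msbp M V \<Theta> \<pi> \<psi> P0" and f: "f \<in> borel_measurable borel" and fb: "\<And>x. \<bar>f x\<bar> \<le> c"
  shows "cmod ((\<integral>\<omega>. iexp (t * Yf f P0 (V \<omega>) (\<Theta> \<omega>)) \<partial>M) - (\<integral>v. HN P0 f t N v \<partial>distr M PS V))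
     \<le> \<bar>t\<bar> * c * (\<integral>v. pN N v \<partial>distr M PS V)"
proof -
  note F = pm_facts[OF pm]
  interpret prob_space M by (rule F(1))
  have Vm[measurable]: "V \<in> M \<rightarrow>\<^sub>M PS" by (rule F(10))
  have Tm[measurable]: "\<Theta> \<in> M \<rightarrow>\<^sub>M PA" by (rule F(11))
  have fm[measurable]: "f \<in> borel_measurable borel" by (rule f)
  define T where "T \<omega> = (\<Sum>j<N. sb_weights (V \<omega>) j * f (\<Theta> \<omega> j))" for \<omega>
  have Tmeas: "T \<in> borel_measurable M" unfolding T_def sb_weights_def by measurable
  have Ym: "(\<lambda>\<omega>. Yf f P0 (V \<omega>) (\<Theta> \<omega>)) \<in> borel_measurable M" by (rule Y_meas[OF pm f fb])
  have i1: "integrable M (\<lambda>\<omega>. iexp (t * Yf f P0 (V \<omega>) (\<Theta> \<omega>)))"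
    by (rule integrable_const_bound[where B=1]) (use Ym in \<open>simp_all add: norm_exp_i_times\<close>)
  have i2: "integrable M (\<lambda>\<omega>. iexp (t * T \<omega>))"
    by (rule integrable_const_bound[where B=1]) (use Tmeas in \<open>simp_all add: norm_exp_i_times\<close>)
  have eqH: "(\<integral>v. HN P0 f t N v \<partial>distr M PS V) = (\<integral>\<omega>. iexp (t * T \<omega>) \<partial>M)"
    unfolding HN_def T_def by (rule indep_char[OF F(1) F(7) F(8) F(3,4) f, symmetric])
  have pm': "(\<lambda>\<omega>. pN N (V \<omega>)) \<in> borel_measurable M"
    using measurable_compose[OF Vm borel_PS[OF borel_measurable_continuous_onI[OF pN_cont]]] .
  have "cmod ((\<integral>\<omega>. iexp (t * Yf f P0 (V \<omega>) (\<Theta> \<omega>)) \<partial>M) - (\<integral>\<omega>. iexp (t * T \<omega>) \<partial>M))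
      = cmod (\<integral>\<omega>. iexp (t * Yf f P0 (V \<omega>) (\<Theta> \<omega>)) - iexp (t * T \<omega>) \<partial>M)"
    using i1 i2 by simp
  also have "\<dots> \<le> (\<integral>\<omega>. cmod (iexp (t * Yf f P0 (V \<omega>) (\<Theta> \<omega>)) - iexp (t * T \<omega>)) \<partial>M)"
    by (rule integral_norm_bound)
  also have "\<dots> \<le> (\<integral>\<omega>. \<bar>t\<bar> * c * pN N (V \<omega>) \<partial>M)"
  proof (rule integral_mono_AE)
    show "integrable M (\<lambda>\<omega>. cmod (iexp (t * Yf f P0 (V \<omega>) (\<Theta> \<omega>)) - iexp (t * T \<omega>)))"
      using i1 i2 by auto
    show "integrable M (\<lambda>\<omega>. \<bar>t\<bar> * c * pN N (V \<omega>))"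
      by (intro integrable_mult_right integrable_const_bound[where B=1]) (simp_all add: pN_bound pm')
    show "AE \<omega> in M. cmod (iexp (t * Yf f P0 (V \<omega>) (\<Theta> \<omega>)) - iexp (t * T \<omega>)) \<le> \<bar>t\<bar> * c * pN N (V \<omega>)"
      using F(9)
    proof (rule AE_mp, intro AE_I2 impI)
      fix \<omega> assume \<omega>: "\<omega> \<in> space M" and pr: "sb_weights (V \<omega>) sums 1"
      have K: "V \<omega> \<in> Kcube" by (rule F(5)[OF \<omega>])
      have "cmod (iexp (t * Yf f P0 (V \<omega>) (\<Theta> \<omega>)) - iexp (t * T \<omega>)) \<le> \<bar>t * Yf f P0 (V \<omega>) (\<Theta> \<omega>) - t * T \<omega>\<bar>"
        by (rule cmod_iexp_diff)
      also have "\<dots> = \<bar>t\<bar> * \<bar>Yf f P0 (V \<omega>) (\<Theta> \<omega>) - T \<omega>\<bar>"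
        by (simp add: right_diff_distrib[symmetric] abs_mult)
      also have "\<dots> \<le> \<bar>t\<bar> * (c * (\<Prod>i<N. 1 - V \<omega> i))"
        unfolding T_def by (intro mult_left_mono Yf_trunc[OF K F(3,4) f fb pr]) simp
      also have "\<dots> = \<bar>t\<bar> * c * pN N (V \<omega>)" by (simp add: pN_K[OF K])
      finally show "cmod (iexp (t * Yf f P0 (V \<omega>) (\<Theta> \<omega>)) - iexp (t * T \<omega>)) \<le> \<bar>t\<bar> * c * pN N (V \<omega>)" .
    qed
  qed
  also have "\<dots> = \<bar>t\<bar> * c * (\<integral>v. pN N v \<partial>distr M PS V)"
    by (simp add: integral_distr[OF Vm borel_PS[OF borel_measurable_continuous_onI[OF pN_cont]]])
  finally show ?thesis by (simp add: eqH)
qed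

lemma pN_lim:
  assumes pm: "proper_msbp M V \<Theta> \<pi> \<psi> P0"
  shows "(\<lambda>N. \<integral>v. pN N v \<partial>distr M PS V) \<longlonglongrightarrow> 0"
proof -
  note F = pm_facts[OF pm]
  have Vm: "V \<in> M \<rightarrow>\<^sub>M PS" by (rule F(10))
  have pm': "(\<lambda>\<omega>. pN N (V \<omega>)) \<in> borel_measurable M" for N
    using measurable_compose[OF Vm borel_PS[OF borel_measurable_continuous_onI[OF pN_cont]]] .
  have eq: "(\<integral>v. pN N v \<partial>distr M PS V) = (\<integral>\<omega>. pN N (V \<omega>) \<partial>M)" for N
    by (rule integral_distr[OF Vm borel_PS[OF borel_measurable_continuous_onI[OF pN_cont]]])
  interpret prob_space M by (rule F(1))
  have "(\<lambda>N. \<integral>\<omega>. pN N (V \<omega>) \<partial>M) \<longlonglongrightarrow> (\<integral>\<omega>. 0 \<partial>M)"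
  proof (rule integral_dominated_convergence[where w="\<lambda>_. 1"])
    show "(\<lambda>\<omega>. 0::real) \<in> borel_measurable M" by simp
    show "\<And>N. (\<lambda>\<omega>. pN N (V \<omega>)) \<in> borel_measurable M" by (rule pm')
    show "integrable M (\<lambda>_. 1::real)" by simp
    show "\<And>N. AE \<omega> in M. norm (pN N (V \<omega>)) \<le> 1" using pN_bound by simp
    show "AE \<omega> in M. (\<lambda>N. pN N (V \<omega>)) \<longlonglongrightarrow> 0"
      using F(9)
    proof (rule AE_mp, intro AE_I2 impI)
      fix \<omega> assume \<omega>: "\<omega> \<in> space M" and pr: "sb_weights (V \<omega>) sums 1"
      have K: "V \<omega> \<in> Kcube" by (rule F(5)[OF \<omega>])
      have "(\<lambda>N. \<Sum>j<N. sb_weights (V \<omega>) j) \<longlonglongrightarrow> 1" using pr by (simp add: sums_def)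
      then have "(\<lambda>N. 1 - (\<Sum>j<N. sb_weights (V \<omega>) j)) \<longlonglongrightarrow> 1 - 1" by (intro tendsto_diff tendsto_const)
      then show "(\<lambda>N. pN N (V \<omega>)) \<longlonglongrightarrow> 0" by (simp add: pN_K[OF K] sbw_partial)
    qed
  qed
  then show ?thesis by (simp add: eq)
qed

lemma real_distr_Y:
  assumes pm: "proper_msbp M V \<Theta> \<pi> \<psi> P0" and f: "f \<in> borel_measurable borel" and fb: "\<And>x. \<bar>f x\<bar> \<le> c"
  shows "real_distribution (distr M borel (\<lambda>\<omega>. Yf f P0 (V \<omega>) (\<Theta> \<omega>)))"
proof -
  note F = pm_facts[OF pm]
  have "prob_space (distr M borel (\<lambda>\<omega>. Yf f P0 (V \<omega>) (\<Theta> \<omega>)))"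
    by (rule prob_space.prob_space_distr[OF F(1) Y_meas[OF pm f fb]])
  then show ?thesis unfolding real_distribution_def real_distribution_axioms_def by simp
qed

lemma char_Y:
  assumes pm: "proper_msbp M V \<Theta> \<pi> \<psi> P0" and f: "f \<in> borel_measurable borel" and fb: "\<And>x. \<bar>f x\<bar> \<le> c"
  shows "char (distr M borel (\<lambda>\<omega>. Yf f P0 (V \<omega>) (\<Theta> \<omega>))) t = (\<integral>\<omega>. iexp (t * Yf f P0 (V \<omega>) (\<Theta> \<omega>)) \<partial>M)"
  unfolding char_def by (rule integral_distr[OF Y_meas[OF pm f fb]]) simp

lemma part3:
  fixes M :: "'w measure" and V :: "'w \<Rightarrow> nat \<Rightarrow> real" and \<Theta> :: "'w \<Rightarrow> nat \<Rightarrow> 'a::topological_space"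
    and Mn :: "nat \<Rightarrow> 'u measure" and Vn :: "nat \<Rightarrow> 'u \<Rightarrow> nat \<Rightarrow> real" and \<Theta>n :: "nat \<Rightarrow> 'u \<Rightarrow> nat \<Rightarrow> 'a"
  assumes lim: "proper_msbp M V \<Theta> \<pi> \<psi> P0"
    and seq: "\<And>n. proper_msbp (Mn n) (Vn n) (\<Theta>n n) (\<pi>n n) (\<psi>n n) (P0n n)"
    and conv_P0: "weak_conv_seq P0n P0"
    and wcV: "weak_conv_seq (\<lambda>n. distr (Mn n) PS (Vn n)) (distr M PS V)"
    and fc: "continuous_on UNIV f" and fb: "\<And>x. \<bar>f x\<bar> \<le> c"
  shows "weak_conv_seq (\<lambda>n. distr (Mn n) borel (\<lambda>\<omega>. Yf f (P0n n) (Vn n \<omega>) (\<Theta>n n \<omega>)))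
                       (distr M borel (\<lambda>\<omega>. Yf f P0 (V \<omega>) (\<Theta> \<omega>)))"
proof -
  have f: "f \<in> borel_measurable borel" using fc by (rule borel_measurable_continuous_onI)
  note F = pm_facts[OF lim]
  note Fs = pm_facts[OF seq]
  let ?\<mu> = "distr M PS V" and ?\<mu>s = "\<lambda>n. distr (Mn n) PS (Vn n)"
  let ?A = "\<lambda>t. \<integral>\<omega>. iexp (t * Yf f P0 (V \<omega>) (\<Theta> \<omega>)) \<partial>M"
  let ?As = "\<lambda>t n. \<integral>\<omega>. iexp (t * Yf f (P0n n) (Vn n \<omega>) (\<Theta>n n \<omega>)) \<partial>Mn n"
  have musets: "sets (?\<mu>s n) = sets borel" "prob_space (?\<mu>s n)" for n
    using Fs(1)[of n] Fs(10)[of n] sets_PiM_equal_borel by (auto intro: prob_space.prob_space_distr)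
  have musets0: "sets ?\<mu> = sets borel" "prob_space ?\<mu>"
    using F(1) F(10) sets_PiM_equal_borel by (auto intro: prob_space.prob_space_distr)
  have charconv: "(\<lambda>n. ?As t n) \<longlonglongrightarrow> ?A t" for t
  proof -
    define C where "C = \<bar>t\<bar> * \<bar>c\<bar> + 1"
    have C1: "C > 0" unfolding C_def by (simp add: add_nonneg_pos)
    have C2: "\<bar>t\<bar> * c \<le> C" unfolding C_def
      using mult_left_mono[OF abs_ge_self[of c] abs_ge_zero[of t]] by simp
    note C = C1 C2
    show ?thesis unfolding lim_sequentially
    proof (intro allI impI)
      fix e :: real assume e: "e > 0"
      then have eC: "e / (4 * C) > 0" using C by simp
      from pN_lim[OF lim] eC obtain N where N: "\<bar>\<integral>v. pN N v \<partial>?\<mu>\<bar> < e / (4 * C)"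
        unfolding lim_sequentially dist_real_def by (metis diff_zero order_refl)
      have pconv: "(\<lambda>n. \<integral>v. pN N v \<partial>?\<mu>s n) \<longlonglongrightarrow> (\<integral>v. pN N v \<partial>?\<mu>)"
        using wcV pN_cont[of N] unfolding weak_conv_seq_def bounded_real using pN_bound by blast
      have hconv: "(\<lambda>n. \<integral>v. HN (P0n n) f t N v \<partial>?\<mu>s n) \<longlonglongrightarrow> (\<integral>v. HN P0 f t N v \<partial>?\<mu>)"
      proof (rule weak_conv_cconvC[where K=Kcube and r=clampK and B=1])
        show "compact Kcube" by (rule compact_Kcube)
        show "continuous_on UNIV clampK" by (rule continuous_clampK)
        show "\<And>x. clampK x \<in> Kcube" "\<And>x. x \<in> Kcube \<Longrightarrow> clampK x = x" by (simp_all add: clampK_in clampK_id)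
        show "\<And>n. prob_space (?\<mu>s n)" "\<And>n. sets (?\<mu>s n) = sets borel" "prob_space ?\<mu>" "sets ?\<mu> = sets borel"
          using musets musets0 by simp_all
        show "\<And>n. AE x in ?\<mu>s n. x \<in> Kcube" "AE x in ?\<mu>. x \<in> Kcube"
          using pm_AE_K[OF seq] pm_AE_K[OF lim] by blast+
        show "weak_conv_seq ?\<mu>s ?\<mu>" by (rule wcV)
        show "\<And>n. HN (P0n n) f t N \<in> borel_measurable borel" using HN_meas[OF Fs(3,4) f fb] by blast
        show "HN P0 f t N \<in> borel_measurable borel" by (rule HN_meas[OF F(3,4) f fb])
        show "\<And>n x. cmod (HN (P0n n) f t N x) \<le> 1" using HN_bound[OF Fs(3,4) f] by blast
        show "\<And>x. cmod (HN P0 f t N x) \<le> 1" by (rule HN_bound[OF F(3,4) f])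
        show "cconvC Kcube (\<lambda>n. HN (P0n n) f t N) (HN P0 f t N)"
          using HN_cconv[OF Fs(3,4) F(3,4) conv_P0 fc fb, of t N] unfolding cconvC_def by blast
      qed
      obtain n1 where n1: "\<And>n. n \<ge> n1 \<Longrightarrow> \<bar>(\<integral>v. pN N v \<partial>?\<mu>s n) - (\<integral>v. pN N v \<partial>?\<mu>)\<bar> < e / (4 * C)"
        using pconv eC unfolding lim_sequentially dist_real_def by blast
      obtain n2 where n2: "\<And>n. n \<ge> n2 \<Longrightarrow> cmod ((\<integral>v. HN (P0n n) f t N v \<partial>?\<mu>s n) - (\<integral>v. HN P0 f t N v \<partial>?\<mu>)) < e / 4"
        using hconv e unfolding lim_sequentially dist_norm by (metis zero_less_divide_iff zero_less_numeral)
      have "dist (?As t n) (?A t) < e" if n: "n \<ge> max n1 n2" for n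
      proof -
        let ?p = "\<integral>v. pN N v \<partial>?\<mu>" and ?pn = "\<integral>v. pN N v \<partial>?\<mu>s n"
        let ?h = "\<integral>v. HN P0 f t N v \<partial>?\<mu>" and ?hn = "\<integral>v. HN (P0n n) f t N v \<partial>?\<mu>s n"
        have a: "cmod (?As t n - ?hn) \<le> \<bar>t\<bar> * c * ?pn" by (rule char_approx[OF seq f fb])
        have b: "cmod (?A t - ?h) \<le> \<bar>t\<bar> * c * ?p" by (rule char_approx[OF lim f fb])
        have p0: "?p \<ge> 0" "?pn \<ge> 0" unfolding pN_def
          by (auto intro!: integral_nonneg_AE AE_I2 prod_nonneg)
        have pn: "?pn < 2 * (e / (4 * C))" using n1[of n] N n by auto
        have c0: "\<bar>t\<bar> * c \<ge> 0"
          using fb[of undefined] by (auto intro: mult_nonneg_nonneg order_trans[OF abs_ge_zero])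
        have a': "cmod (?As t n - ?hn) \<le> C * (2 * (e / (4 * C)))"
          using a mult_mono[OF C(2) less_imp_le[OF pn] _ p0(2)] c0 C by (smt (verit))
        have b': "cmod (?A t - ?h) \<le> C * (e / (4 * C))"
          using b mult_mono[OF C(2) less_imp_le[OF N[unfolded abs_of_nonneg[OF p0(1)]]] _ p0(1)] c0 C by (smt (verit))
        have "cmod (?As t n - ?A t) \<le> cmod (?As t n - ?hn) + cmod (?hn - ?h) + cmod (?A t - ?h)"
          using norm_triangle_ineq4[of "?As t n - ?hn + (?hn - ?h)" "?A t - ?h"]
            norm_triangle_ineq[of "?As t n - ?hn" "?hn - ?h"] by (simp add: algebra_simps)
        also have "\<dots> < C * (2 * (e / (4 * C))) + e / 4 + C * (e / (4 * C))"
          using a' b' n2[of n] n by simp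
        also have "\<dots> = e" using C by (simp add: field_simps)
        finally show ?thesis by (simp add: dist_norm)
      qed
      then show "\<exists>no. \<forall>n\<ge>no. dist (?As t n) (?A t) < e" by blast
    qed
  qed
  have wm: "weak_conv_m (\<lambda>n. distr (Mn n) borel (\<lambda>\<omega>. Yf f (P0n n) (Vn n \<omega>) (\<Theta>n n \<omega>)))
                       (distr M borel (\<lambda>\<omega>. Yf f P0 (V \<omega>) (\<Theta> \<omega>)))"
  proof (rule levy_continuity)
    show "\<And>n. real_distribution (distr (Mn n) borel (\<lambda>\<omega>. Yf f (P0n n) (Vn n \<omega>) (\<Theta>n n \<omega>)))"
      by (rule real_distr_Y[OF seq f fb])
    show "real_distribution (distr M borel (\<lambda>\<omega>. Yf f P0 (V \<omega>) (\<Theta> \<omega>)))"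
      by (rule real_distr_Y[OF lim f fb])
    fix t
    show "(\<lambda>n. char (distr (Mn n) borel (\<lambda>\<omega>. Yf f (P0n n) (Vn n \<omega>) (\<Theta>n n \<omega>))) t)
        \<longlonglongrightarrow> char (distr M borel (\<lambda>\<omega>. Yf f P0 (V \<omega>) (\<Theta> \<omega>))) t"
      using charconv[of t] by (simp add: char_Y[OF seq f fb] char_Y[OF lim f fb])
  qed
  show ?thesis unfolding weak_conv_seq_def
  proof (intro allI impI, elim conjE)
    fix \<phi> :: "real \<Rightarrow> real" assume \<phi>c: "continuous_on UNIV \<phi>" and \<phi>b: "bounded (range \<phi>)"
    then obtain B where B: "\<And>x. \<bar>\<phi> x\<bar> \<le> B" unfolding bounded_real by blast
    show "(\<lambda>n. \<integral>x. \<phi> x \<partial>distr (Mn n) borel (\<lambda>\<omega>. Yf f (P0n n) (Vn n \<omega>) (\<Theta>n n \<omega>)))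
        \<longlonglongrightarrow> (\<integral>x. \<phi> x \<partial>distr M borel (\<lambda>\<omega>. Yf f P0 (V \<omega>) (\<Theta> \<omega>)))"
    proof (rule weak_conv_imp_integral_bdd_continuous_conv[OF _ _ wm])
      show "\<And>n. real_distribution (distr (Mn n) borel (\<lambda>\<omega>. Yf f (P0n n) (Vn n \<omega>) (\<Theta>n n \<omega>)))"
        by (rule real_distr_Y[OF seq f fb])
      show "real_distribution (distr M borel (\<lambda>\<omega>. Yf f P0 (V \<omega>) (\<Theta> \<omega>)))"
        by (rule real_distr_Y[OF lim f fb])
      show "\<And>x. isCont \<phi> x" using \<phi>c by (simp add: continuous_on_eq_continuous_at)
      show "\<And>x. norm (\<phi> x) \<le> B" using B by simp
    qed
  qed
qed



lemma wc_map:
  assumes wc: "weak_conv_seq \<mu>s \<mu>" and s: "\<And>n. sets (\<mu>s n) = sets PS" "sets \<mu> = sets PS"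
    and T: "T \<in> PS \<rightarrow>\<^sub>M PS" "continuous_on UNIV T"
  shows "weak_conv_seq (\<lambda>n. distr (\<mu>s n) PS T) (distr \<mu> PS T)"
  unfolding weak_conv_seq_def
proof (intro allI impI, elim conjE)
  fix f :: "(nat \<Rightarrow> real) \<Rightarrow> real" assume fc: "continuous_on UNIV f" and fb: "bounded (range f)"
  have fm: "f \<in> borel_measurable PS" using fc by (intro borel_PS borel_measurable_continuous_onI)
  have c: "continuous_on UNIV (\<lambda>x. f (T x))" using continuous_on_compose2[OF fc T(2)] by simp
  have b: "bounded (range (\<lambda>x. f (T x)))" using fb unfolding bounded_real by auto
  have "(\<lambda>n. \<integral>x. f (T x) \<partial>\<mu>s n) \<longlonglongrightarrow> (\<integral>x. f (T x) \<partial>\<mu>)" using wc c b unfolding weak_conv_seq_def by blast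
  moreover have "(\<integral>x. f x \<partial>distr (\<mu>s n) PS T) = (\<integral>x. f (T x) \<partial>\<mu>s n)" for n
    by (rule integral_distr) (simp_all add: measurable_cong_sets[OF s(1) refl] T(1) fm)
  moreover have "(\<integral>x. f x \<partial>distr \<mu> PS T) = (\<integral>x. f (T x) \<partial>\<mu>)"
    by (rule integral_distr) (simp_all add: measurable_cong_sets[OF s(2) refl] T(1) fm)
  ultimately show "(\<lambda>n. \<integral>x. f x \<partial>distr (\<mu>s n) PS T) \<longlonglongrightarrow> (\<integral>x. f x \<partial>distr \<mu> PS T)" by simp
qed

lemma sbw_meas: "sb_weights \<in> PS \<rightarrow>\<^sub>M PS"
  unfolding sb_weights_def[abs_def] by (rule measurable_PiM_single') auto

lemma sbw_cont: "continuous_on UNIV sb_weights"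
  by (rule continuous_on_coordinatewise_then_product) (rule continuous_sbw)

theorem mainTheorem4:
  fixes M :: "'w measure" and V :: "'w \<Rightarrow> nat \<Rightarrow> real" and \<Theta> :: "'w \<Rightarrow> nat \<Rightarrow> 'a::polish_space"
    and \<pi> :: "real measure" and \<psi> :: "nat \<Rightarrow> real \<Rightarrow> real measure" and P0 :: "'a measure"
    and Mn :: "nat \<Rightarrow> 'u measure" and Vn :: "nat \<Rightarrow> 'u \<Rightarrow> nat \<Rightarrow> real"
    and \<Theta>n :: "nat \<Rightarrow> 'u \<Rightarrow> nat \<Rightarrow> 'a"
    and \<pi>n :: "nat \<Rightarrow> real measure" and \<psi>n :: "nat \<Rightarrow> nat \<Rightarrow> real \<Rightarrow> real measure"
    and P0n :: "nat \<Rightarrow> 'a measure"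
  assumes lim: "proper_msbp M V \<Theta> \<pi> \<psi> P0"
    and seq: "\<And>n. proper_msbp (Mn n) (Vn n) (\<Theta>n n) (\<pi>n n) (\<psi>n n) (P0n n)"
    and conv_pi: "weak_conv_seq \<pi>n \<pi>"
    and conv_P0: "weak_conv_seq P0n P0"
    and conv_psi: "\<And>j u us. j \<ge> 1 \<Longrightarrow> u \<in> {0..1} \<Longrightarrow> (\<forall>n. us n \<in> {0..1}) \<Longrightarrow>
                     us \<longlonglongrightarrow> u \<Longrightarrow> weak_conv_seq (\<lambda>n. \<psi>n n j (us n)) (\<psi> j u)"
  shows "weak_conv_seq (\<lambda>n. distr (Mn n) (PiM UNIV (\<lambda>_. borel)) (Vn n))
                       (distr M (PiM UNIV (\<lambda>_. borel)) V) \<and>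
         weak_conv_seq (\<lambda>n. distr (Mn n) (PiM UNIV (\<lambda>_. borel)) (\<lambda>\<omega>. sb_weights (Vn n \<omega>)))
                       (distr M (PiM UNIV (\<lambda>_. borel)) (\<lambda>\<omega>. sb_weights (V \<omega>))) \<and>
         (\<forall>f :: 'a \<Rightarrow> real. continuous_on UNIV f \<and> bounded (range f) \<longrightarrow>
           weak_conv_seq
             (\<lambda>n. distr (Mn n) borel (\<lambda>\<omega>. \<integral>x. f x \<partial>sb_measure (sb_weights (Vn n \<omega>)) (\<Theta>n n \<omega>) (P0n n)))
             (distr M borel (\<lambda>\<omega>. \<integral>x. f x \<partial>sb_measure (sb_weights (V \<omega>)) (\<Theta> \<omega>) P0)))"
proof (intro conjI allI impI)
  note F = pm_facts[OF lim]
  note Fs = pm_facts[OF seq]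
  show wcV: "weak_conv_seq (\<lambda>n. distr (Mn n) PS (Vn n)) (distr M PS V)"
    by (rule chain_conv[OF Fs(6) Fs(2) F(6) F(2) pm_AE_K[OF seq] pm_AE_K[OF lim] conv_pi conv_psi])
  have "weak_conv_seq (\<lambda>n. distr (distr (Mn n) PS (Vn n)) PS sb_weights) (distr (distr M PS V) PS sb_weights)"
    by (rule wc_map[OF wcV _ _ sbw_meas sbw_cont]) simp_all
  then show "weak_conv_seq (\<lambda>n. distr (Mn n) PS (\<lambda>\<omega>. sb_weights (Vn n \<omega>))) (distr M PS (\<lambda>\<omega>. sb_weights (V \<omega>)))"
    by (simp add: distr_distr[OF sbw_meas Fs(10)] distr_distr[OF sbw_meas F(10)] o_def)
  fix f :: "'a \<Rightarrow> real" assume "continuous_on UNIV f \<and> bounded (range f)"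
  then have fc: "continuous_on UNIV f" and fbd: "bounded (range f)" by auto
  then obtain c where fb: "\<And>x. \<bar>f x\<bar> \<le> c" unfolding bounded_real by blast
  show "weak_conv_seq
             (\<lambda>n. distr (Mn n) borel (\<lambda>\<omega>. \<integral>x. f x \<partial>sb_measure (sb_weights (Vn n \<omega>)) (\<Theta>n n \<omega>) (P0n n)))
             (distr M borel (\<lambda>\<omega>. \<integral>x. f x \<partial>sb_measure (sb_weights (V \<omega>)) (\<Theta> \<omega>) P0))"
    using part3[OF lim seq conv_P0 wcV fc fb] by (simp add: Yf_def)
qed



end
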